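(* Let $g:\{0,1\}^{\ell}\to\{0,1\}^{\ell}$ be a kernel of dimension $\ell\ge 2$ and let $\mathcal{W}$ be a binary-input memoryless channel. Suppose there exists ${\bf u}_0^{\ell-2}\in\{0,1\}^{\ell-1}$ such that $d_H\big(g({\bf u}_0^{\ell-2}\bullet 0),\,g({\bf u}_0^{\ell-2}\bullet 1)\big)\ge 2$. Then the sequence $\{I_n\}_{n\ge 0}$ converges almost surely to a random variable $I_\infty$ with $I_\infty\in\{0,1\}$ almost surely and $\Pr(I_\infty=1)=I(\mathcal{W})$.
   Context: A kernel of dimension $\ell$ is a bijection $g:\{0,1\}^\ell\to\{0,1\}^\ell$; write $g({\bf u})=(g_0({\bf u}),\dots,g_{\ell-1}({\bf u}))$. ${\bf a}\bullet{\bf b}$ denotes concatenation of vectors, $d_H$ is Hamming distance. For a binary-input memoryless channel $\mathcal{W}$ with transition probabilities $\mathcal{W}(y\mid x)$, $I(\mathcal{W})$ denotes its symmetric capacity (mutual information between a uniformly distributed input and the output) and $Z(\mathcal{W})=\sum_y\sqrt{\mathcal{W}(y\mid 0)\mathcal{W}(y\mid 1)}$ its Bhattacharyya parameter. For $i\in\{0,\dots,\ell-1\}$, the synthetic channel $\mathcal{W}^{(i)}$ (depending on $g$) has input $u_i\in\{0,1\}$, output $({\bf y}_0^{\ell-1},{\bf u}_0^{i-1})$ and transition probabilities $\mathcal{W}^{(i)}({\bf y},{\bf u}_0^{i-1}\mid u_i)=2^{-(\ell-1)}\sum_{{\bf u}_{i+1}^{\ell-1}\in\{0,1\}^{\ell-i-1}}\prod_{j=0}^{\ell-1}\mathcal{W}(y_j\mid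 g_j({\bf u}_0^{\ell-1}))$. Let $B_1,B_2,\dots$ be i.i.d. uniform on $\{0,\dots,\ell-1\}$, and define the random channel sequence $W_0=\mathcal{W}$, $W_{n+1}=W_n^{(B_{n+1})}$ (the synthetic channel construction applied to $W_n$), with $I_n=I(W_n)$ and $Z_n=Z(W_n)$. *)

theory Defs
  imports "HOL-Probability.Probability"
begin

text \<open>A binary-input memoryless channel with discrete output alphabet 'o is a function
  W :: bool \<Rightarrow> 'o \<Rightarrow> real, W x y = W(y|x).\<close>

definition is_channel :: "(bool \<Rightarrow> 'o \<Rightarrow> real) \<Rightarrow> bool" where
  "is_channel W \<longleftrightarrow> (\<forall>x y. 0 \<le> W x y) \<and> (\<forall>x. ((\<lambda>y. W x y) has_sum 1) UNIV)"

definition is_kernel :: "nat \<Rightarrow> (bool list \<Rightarrow> bool list) \<Rightarrow> bool" where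
  "is_kernel l g \<longleftrightarrow> bij_betw g {u. length u = l} {u. length u = l}"

definition hamming :: "bool list \<Rightarrow> bool list \<Rightarrow> nat" where
  "hamming a b = card {j. j < length a \<and> j < length b \<and> a ! j \<noteq> b ! j}"

definition sym_cap :: "(bool \<Rightarrow> 'o \<Rightarrow> real) \<Rightarrow> real" where
  "sym_cap W = (\<Sum>\<^sub>\<infinity> y. \<Sum>x\<in>{False, True}.
      (if W x y = 0 then 0
       else (1/2) * W x y * log 2 (W x y / ((1/2) * W False y + (1/2) * W True y))))"

definition bhattacharyya :: "(bool \<Rightarrow> 'o \<Rightarrow> real) \<Rightarrow> real" where
  "bhattacharyya W = (\<Sum>\<^sub>\<infinity> y. sqrt (W False y * W True y))"

text \<open>A universal output alphabet closed under the synthetic channel construction: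
  Base y is an original output, Node ys us is the output (y_0^{l-1}, u_0^{i-1}).\<close>
datatype 'y out = Base 'y | Node "'y out list" "bool list"

definition lift_chan :: "(bool \<Rightarrow> 'y \<Rightarrow> real) \<Rightarrow> bool \<Rightarrow> 'y out \<Rightarrow> real" where
  "lift_chan W x z = (case z of Base y \<Rightarrow> W x y | Node _ _ \<Rightarrow> 0)"

definition synth :: "nat \<Rightarrow> (bool list \<Rightarrow> bool list) \<Rightarrow> nat
    \<Rightarrow> (bool \<Rightarrow> 'y out \<Rightarrow> real) \<Rightarrow> bool \<Rightarrow> 'y out \<Rightarrow> real" where
  "synth l g i W ui z = (case z of
     Base _ \<Rightarrow> 0
   | Node ys us \<Rightarrow>
       (if length ys = l \<and> length us = i then
          (1 / 2 ^ (l - 1)) * (\<Sum>v\<in>{v. length v = l - i - 1}.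
              \<Prod>j<l. W (g (us @ [ui] @ v) ! j) (ys ! j))
        else 0))"

primrec chan_seq :: "nat \<Rightarrow> (bool list \<Rightarrow> bool list) \<Rightarrow> (bool \<Rightarrow> 'y \<Rightarrow> real)
    \<Rightarrow> (nat \<Rightarrow> 'a \<Rightarrow> nat) \<Rightarrow> 'a \<Rightarrow> nat \<Rightarrow> bool \<Rightarrow> 'y out \<Rightarrow> real" where
  "chan_seq l g W B \<omega> 0 = lift_chan W"
| "chan_seq l g W B \<omega> (Suc n) = synth l g (B (Suc n) \<omega>) (chan_seq l g W B \<omega> n)"

end

theory Submission
  imports Defs
begin


definition xl :: "real \<Rightarrow> real" where "xl x = x * log 2 x"
definition EE :: "real \<Rightarrow> real \<Rightarrow> real" where "EE p q = xl p + xl q - xl (p + q)"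

lemma xl_0[simp]: "xl 0 = 0" and xl_1[simp]: "xl 1 = 0"
  by (auto simp: xl_def)

lemma gibbs:
  assumes "x \<ge> 0" "z > 0"
  shows "xl x - x * log 2 z \<ge> (x - z) / ln 2"
proof (cases "x = 0")
  case True thus ?thesis using assms by (simp add: xl_def divide_nonpos_pos)
next
  case False
  hence x: "x > 0" using assms by auto
  have "ln (z/x) \<le> z/x - 1" using ln_le_minus_one[of "z/x"] x assms by auto
  hence "ln (x/z) \<ge> 1 - z/x" using x assms by (simp add: ln_div)
  hence "x * ln (x/z) \<ge> x * (1 - z/x)" using x by (intro mult_left_mono) auto
  also have "x * (1 - z/x) = x - z" using x by (simp add: field_simps)
  finally have *: "x * ln (x/z) \<ge> x - z" .
  have "xl x - x * log 2 z = x * ln (x/z) / ln 2"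
    using x assms by (simp add: xl_def log_def ln_div field_simps)
  thus ?thesis using * by (simp add: divide_right_mono)
qed

lemma xl_mult:
  assumes "a \<ge> 0" "b \<ge> 0"
  shows "xl (a * b) = a * xl b + b * xl a"
  using assms by (cases "a = 0"; cases "b = 0") (auto simp: xl_def log_mult algebra_simps)

lemma xl_convex:
  assumes "x \<ge> 0" "y \<ge> 0" "0 \<le> t" "t \<le> 1"
  shows "xl (t * x + (1 - t) * y) \<le> t * xl x + (1 - t) * xl y"
proof -
  define z where "z = t * x + (1 - t) * y"
  have z0: "z \<ge> 0" using assms by (simp add: z_def)
  show ?thesis
  proof (cases "z = 0")
    case True
    hence "t * x = 0" "(1 - t) * y = 0" using assms z_def
      by (smt (verit) mult_nonneg_nonneg)+
    hence "t * xl x = 0" "(1 - t) * xl y = 0" by (metis mult.assoc mult_zero_left xl_def)+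
    moreover have "xl (t * x + (1 - t) * y) = 0" using True z_def by simp
    ultimately show ?thesis by linarith
  next
    case False
    hence z: "z > 0" using z0 by auto
    have a: "t * (xl x - x * log 2 z) \<ge> t * ((x - z)/ln 2)"
      using gibbs[OF assms(1) z] assms by (intro mult_left_mono) auto
    have b: "(1-t) * (xl y - y * log 2 z) \<ge> (1-t) * ((y - z)/ln 2)"
      using gibbs[OF assms(2) z] assms by (intro mult_left_mono) auto
    have c: "t * ((x - z)/ln 2) + (1-t) * ((y - z)/ln 2) = 0"
      by (simp add: z_def field_simps)
    have d: "xl z = t * (x * log 2 z) + (1 - t) * (y * log 2 z)"
      by (simp add: xl_def z_def algebra_simps)
    show ?thesis using a b c d unfolding z_def[symmetric] by (simp add: algebra_simps)
  qed
qed

lemma EE_sym: "EE p q = EE q p" by (simp add: EE_def add.commute)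
lemma EE_0[simp]: "EE 0 q = 0" "EE p 0 = 0" by (auto simp: EE_def)

lemma EE_le0:
  assumes "p \<ge> 0" "q \<ge> 0"
  shows "EE p q \<le> 0"
proof -
  have "xl p \<le> p * log 2 (p + q)"
    using assms by (cases "p = 0") (auto simp: xl_def intro!: mult_left_mono)
  moreover have "xl q \<le> q * log 2 (p + q)"
    using assms by (cases "q = 0") (auto simp: xl_def intro!: mult_left_mono)
  ultimately show ?thesis by (simp add: EE_def xl_def algebra_simps)
qed

lemma xl_half:
  assumes "s \<ge> 0"
  shows "xl (s / 2) = xl s / 2 - s / 2"
  using assms by (cases "s = 0") (auto simp: xl_def log_divide algebra_simps)

lemma EE_ge:
  assumes "p \<ge> 0" "q \<ge> 0"
  shows "EE p q \<ge> - (p + q)"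
proof -
  have "xl ((p+q)/2) \<le> xl p / 2 + xl q / 2"
    using xl_convex[of p q "1/2"] assms by (simp add: add_divide_distrib)
  moreover have "xl ((p+q)/2) = xl (p+q) / 2 - (p+q) / 2" using assms by (intro xl_half) auto
  ultimately show ?thesis unfolding EE_def by (simp add: field_simps)
qed

lemma abs_EE: "p \<ge> 0 \<Longrightarrow> q \<ge> 0 \<Longrightarrow> \<bar>EE p q\<bar> \<le> p + q"
  using EE_ge EE_le0 by fastforce

lemma EE_hom:
  assumes "c \<ge> 0" "p \<ge> 0" "q \<ge> 0"
  shows "EE (c * p) (c * q) = c * EE p q"
proof -
  have "EE (c * p) (c * q) = xl (c*p) + xl (c*q) - xl (c * (p+q))"
    by (simp add: EE_def algebra_simps)
  also have "\<dots> = c * EE p q"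
  proof -
    have "xl (c*(p+q)) = c * xl (p+q) + (p+q) * xl c" by (rule xl_mult) (use assms in auto)
    thus ?thesis using assms by (simp add: xl_mult EE_def algebra_simps)
  qed
  finally show ?thesis .
qed

definition KK :: "real \<Rightarrow> real \<Rightarrow> real" where "KK P Q = (P + Q) / 2 + EE P Q / 2"

lemma KK_alt: "P \<ge> 0 \<Longrightarrow> Q \<ge> 0 \<Longrightarrow> KK P Q = (xl P + xl Q)/2 - xl ((P+Q)/2)"
  using xl_half[of "P+Q"] by (simp add: KK_def EE_def field_simps)

lemma psi_aux:
  assumes "p \<ge> 0" "q \<ge> 0" "P \<ge> 0" "Q \<ge> 0" "q \<le> p"
  shows "p * xl P + q * xl Q - xl (p*P + q*Q) + (p*P + q*Q) * log 2 (p + q) \<ge> 2 * q * KK P Q"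
proof (cases "p + q = 0")
  case True
  hence "p = 0" "q = 0" using assms by auto
  thus ?thesis by simp
next
  case False
  define s where "s = p + q"
  have s: "s > 0" using False assms s_def by auto
  define t where "t = (p - q) / s"
  define M where "M = (P + Q) / 2"
  define R where "R = (p*P + q*Q) / s"
  have omt: "1 - t = 2 * q / s" using s by (simp add: t_def s_def field_simps)
  have R: "R = t * P + (1 - t) * M" unfolding omt using s
    by (simp add: R_def t_def M_def field_simps)
  have t: "0 \<le> t" "t \<le> 1" using assms s by (auto simp: t_def s_def)
  have cv: "xl R \<le> t * xl P + (1 - t) * xl M"
    unfolding R by (rule xl_convex) (use assms t in \<open>auto simp: M_def\<close>)
  have R0: "R \<ge> 0" using assms s by (simp add: R_def)
  have "xl (p*P + q*Q) = xl (s * R)" using s by (simp add: R_def)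
  also have "\<dots> = s * xl R + R * xl s" using s R0 by (simp add: xl_mult)
  finally have e1: "xl (p*P + q*Q) - (p*P + q*Q) * log 2 (p + q) = s * xl R"
    using s by (simp add: R_def xl_def s_def)
  have "s * xl R \<le> s * (t * xl P + (1 - t) * xl M)" using cv s by (intro mult_left_mono) auto
  also have "\<dots> = (s * t) * xl P + (s * (1 - t)) * xl M" by (simp add: algebra_simps)
  also have "\<dots> = (p - q) * xl P + 2 * q * xl M" using s omt by (simp add: t_def)
  finally have "s * xl R \<le> (p - q) * xl P + 2 * q * xl M" .
  moreover have "KK P Q = (xl P + xl Q)/2 - xl M" using KK_alt assms by (simp add: M_def)
  moreover have "q * (2 * KK P Q) = q * xl P + q * xl Q - 2 * q * xl M"
  proof -
    have "2 * KK P Q = xl P + xl Q - 2 * xl M" using \<open>KK P Q = (xl P + xl Q)/2 - xl M\<close> by simp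
    hence "q * (2 * KK P Q) = q * (xl P + xl Q - 2 * xl M)" by simp
    thus ?thesis by (simp add: algebra_simps)
  qed
  ultimately show ?thesis using e1 by (simp add: algebra_simps)
qed

lemma psi_ineq:
  assumes "p \<ge> 0" "q \<ge> 0" "P \<ge> 0" "Q \<ge> 0"
  shows "p * xl P + q * xl Q - xl (p*P + q*Q) + (p*P + q*Q) * log 2 (p + q) \<ge> 2 * min p q * KK P Q"
proof (cases "q \<le> p")
  case True
  hence "min p q = q" by simp
  thus ?thesis using psi_aux[OF assms True] by simp
next
  case False
  have "q * xl Q + p * xl P - xl (q*Q + p*P) + (q*Q + p*P) * log 2 (q + p) \<ge> 2 * p * KK Q P"
    using psi_aux[of q p Q P] assms False by auto
  moreover have "KK Q P = KK P Q" by (simp add: KK_def EE_sym add.commute)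
  ultimately show ?thesis using False by (simp add: min_def algebra_simps)
qed

lemma EE_decomp:
  assumes "p \<ge> 0" "q \<ge> 0" "P \<ge> 0" "Q \<ge> 0"
  shows "EE (p*P) (q*Q) = P * xl p + Q * xl q - xl (p + q) * (P + Q)
     + (p * xl P + q * xl Q - xl (p*P + q*Q) + (p*P + q*Q) * log 2 (p + q))
     + xl (p + q) * (P + Q) - (p*P + q*Q) * log 2 (p + q)"
  using assms by (simp add: EE_def xl_mult algebra_simps)

lemma ln_le_sqrt: "x > 0 \<Longrightarrow> ln x \<le> 2 * sqrt x"
proof -
  assume x: "x > 0"
  have "ln (sqrt x) \<le> sqrt x - 1" using ln_le_minus_one x by auto
  moreover have "ln (sqrt x) = ln x / 2" using x by (simp add: ln_sqrt)
  ultimately show ?thesis by simp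
qed

lemma negEE_aux:
  assumes "p \<ge> 0" "q \<ge> 0" "q \<le> p"
  shows "- EE p q \<le> 3 / ln 2 * sqrt (q * (p + q))"
proof (cases "q = 0")
  case True thus ?thesis by simp
next
  case False
  hence q: "q > 0" using assms by auto
  hence p: "p > 0" using assms by auto
  define s where "s = p + q"
  have s: "s > 0" "q \<le> s" "p \<le> s" using p q by (auto simp: s_def)
  have "- EE p q = (p * ln (s/p) + q * ln (s/q)) / ln 2"
    using p q s by (simp add: EE_def xl_def log_def ln_div s_def field_simps)
  moreover have "p * ln (s/p) \<le> q"
  proof -
    have "ln (s/p) \<le> s/p - 1" using ln_le_minus_one p s by auto
    hence "p * ln (s/p) \<le> p * (s/p - 1)" using p by (intro mult_left_mono) auto
    thus ?thesis using p by (simp add: s_def field_simps)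
  qed
  moreover have "q * ln (s/q) \<le> 2 * sqrt (q * s)"
  proof -
    have "ln (s/q) \<le> 2 * sqrt (s/q)" using ln_le_sqrt q s by auto
    hence "q * ln (s/q) \<le> q * (2 * sqrt (s/q))" using q by (intro mult_left_mono) auto
    moreover have "q * sqrt (s/q) = sqrt (q * s)"
      using q s by (simp add: real_sqrt_divide real_sqrt_mult field_simps)
    ultimately show ?thesis by simp
  qed
  moreover have "q \<le> sqrt (q * s)"
    using q s by (intro real_le_rsqrt) (simp add: power2_eq_square mult_left_mono)
  ultimately have "- EE p q \<le> 3 * sqrt (q * s) / ln 2"
    by (simp add: divide_right_mono)
  thus ?thesis by (simp add: s_def)
qed

lemma negEE_sqrt:
  assumes "p \<ge> 0" "q \<ge> 0"
  shows "- EE p q \<le> 3 / ln 2 * sqrt (min p q * (p + q))"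
  using negEE_aux[of p q] negEE_aux[of q p] assms EE_sym[of p q]
  by (cases "q \<le> p") (auto simp: min_def add.commute)

lemma negEE_lin:
  assumes "p \<ge> 0" "q \<ge> 0" "e > 0"
  shows "- EE p q \<le> 3 / (2 * ln 2) * (e * (p + q) + min p q / e)"
proof -
  have "sqrt (min p q * (p + q)) \<le> (e * (p + q) + min p q / e) / 2"
  proof -
    have "sqrt (min p q * (p + q)) = sqrt ((min p q / e) * (e * (p + q)))" using assms by simp
    also have "\<dots> \<le> ((min p q / e) + (e * (p + q))) / 2"
      by (rule arith_geo_mean_sqrt) (use assms in auto)
    finally show ?thesis by simp
  qed
  hence "3 / ln 2 * sqrt (min p q * (p + q)) \<le> 3 / ln 2 * ((e * (p + q) + min p q / e) / 2)"
    by (intro mult_left_mono) auto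
  also have "3 / ln 2 * ((e * (p + q) + min p q / e) / 2) = 3 / (2 * ln 2) * (e * (p + q) + min p q / e)"
    by simp
  finally show ?thesis using negEE_sqrt[OF assms(1,2)] by linarith
qed

lemma symcap_term:
  assumes "p \<ge> 0" "q \<ge> 0"
  shows "(\<Sum>x\<in>{False, True}. (if (if x then q else p) = 0 then 0
       else (1/2) * (if x then q else p) * log 2 ((if x then q else p) / ((1/2) * p + (1/2) * q))))
     = (p + q) / 2 + EE p q / 2"
proof -
  have t: "(if r = 0 then 0 else (1/2) * r * log 2 (r / ((1/2) * p + (1/2) * q)))
      = (xl r - r * log 2 (p + q) + r) / 2" if "r \<ge> 0" "r \<le> p + q" for r
  proof (cases "r = 0")
    case True thus ?thesis by simp
  next
    case False
    hence "r > 0" "p + q > 0" using that by auto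
    thus ?thesis by (simp add: xl_def log_divide field_simps log_mult)
  qed
  define f where "f r = (if r = 0 then 0 else (1/2) * r * log 2 (r / ((1/2) * p + (1/2) * q)))" for r
  have "(\<Sum>x\<in>{False, True}. (if (if x then q else p) = 0 then 0
       else (1/2) * (if x then q else p) * log 2 ((if x then q else p) / ((1/2) * p + (1/2) * q))))
     = f p + f q" by (simp add: f_def)
  also have "\<dots> = (xl p - p * log 2 (p + q) + p) / 2 + (xl q - q * log 2 (p + q) + q) / 2"
    using t[of p] t[of q] assms by (simp only: f_def)
  also have "\<dots> = (p + q) / 2 + EE p q / 2"
    unfolding EE_def xl_def by (simp add: field_simps)
  finally show ?thesis .
qed


lemma summable_bound:
  fixes f :: "'a \<Rightarrow> real"
  assumes "g summable_on A" "\<And>x. x \<in> A \<Longrightarrow> \<bar>f x\<bar> \<le> g x"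
  shows "f summable_on A"
proof -
  have "(\<lambda>x. \<bar>f x\<bar>) summable_on A"
    by (rule summable_on_comparison_test[OF assms(1)]) (use assms(2) in auto)
  thus ?thesis using summable_on_iff_abs_summable_on_real by (metis real_norm_def summable_on_cong)
qed

lemma has_sum_sum_finite:
  fixes f :: "'i \<Rightarrow> 'a \<Rightarrow> real"
  assumes "finite I" "\<And>i. i \<in> I \<Longrightarrow> (f i has_sum s i) A"
  shows "((\<lambda>x. \<Sum>i\<in>I. f i x) has_sum (\<Sum>i\<in>I. s i)) A"
  using assms by (induction I rule: finite_induct) (auto intro!: has_sum_add)

lemma summable_sum_finite:
  fixes f :: "'i \<Rightarrow> 'a \<Rightarrow> real"
  assumes "finite I" "\<And>i. i \<in> I \<Longrightarrow> f i summable_on A"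
  shows "(\<lambda>x. \<Sum>i\<in>I. f i x) summable_on A"
proof -
  have "((\<lambda>x. \<Sum>i\<in>I. f i x) has_sum (\<Sum>i\<in>I. infsum (f i) A)) A"
    using assms by (intro has_sum_sum_finite) auto
  thus ?thesis by (auto simp: summable_on_def)
qed

lemma infsum_sum_finite:
  fixes f :: "'i \<Rightarrow> 'a \<Rightarrow> real"
  assumes "finite I" "\<And>i. i \<in> I \<Longrightarrow> f i summable_on A"
  shows "(\<Sum>\<^sub>\<infinity>x\<in>A. \<Sum>i\<in>I. f i x) = (\<Sum>i\<in>I. \<Sum>\<^sub>\<infinity>x\<in>A. f i x)"
  using has_sum_sum_finite[where f=f and s="\<lambda>i. infsum (f i) A" and A=A] assms
  by (auto intro: infsumI)

lemma PiE_insert_comb: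
  assumes "k \<notin> K"
  shows "PiE (insert k K) (\<lambda>_. UNIV) = (\<lambda>(h,y). h(k:=y)) ` (PiE K (\<lambda>_. UNIV) \<times> (UNIV :: 'b set))"
    and "inj_on (\<lambda>(h,y). h(k:=y)) (PiE K (\<lambda>_. UNIV) \<times> (UNIV :: 'b set))"
proof -
  show "PiE (insert k K) (\<lambda>_. UNIV) = (\<lambda>(h,y). h(k:=y)) ` (PiE K (\<lambda>_. UNIV) \<times> (UNIV :: 'b set))"
    unfolding PiE_insert_eq
    by (subst swap_product [symmetric]) (simp add: image_image case_prod_unfold)
  show "inj_on (\<lambda>(h,y). h(k:=y)) (PiE K (\<lambda>_. UNIV) \<times> (UNIV :: 'b set))"
    using inj_combinator'[of k K "\<lambda>_. UNIV"] assms by simp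
qed

lemma prod_has_sum_nonneg:
  fixes f :: "'k \<Rightarrow> 'b \<Rightarrow> real"
  assumes "finite K" "\<And>k. k \<in> K \<Longrightarrow> (f k has_sum s k) UNIV" "\<And>k y. k \<in> K \<Longrightarrow> f k y \<ge> 0"
  shows "((\<lambda>h. \<Prod>k\<in>K. f k (h k)) has_sum (\<Prod>k\<in>K. s k)) (PiE K (\<lambda>_. UNIV))"
  using assms
proof (induction K rule: finite_induct)
  case empty thus ?case by (simp add: has_sum_finite_iff)
next
  case (insert x F)
  note comb = PiE_insert_comb[OF insert.hyps(2), where 'b='b]
  have IH: "((\<lambda>h. \<Prod>k\<in>F. f k (h k)) has_sum (\<Prod>k\<in>F. s k)) (PiE F (\<lambda>_. UNIV))"
    using insert by auto
  have eq: "(\<lambda>h. \<Prod>k\<in>insert x F. f k (h k)) \<circ> (\<lambda>(h,y). h(x:=y))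
      = (\<lambda>(h,y). f x y * (\<Prod>k\<in>F. f k (h k)))"
    using insert.hyps by (auto simp: fun_eq_iff intro!: prod.cong)
  have inner: "((\<lambda>y. f x y * (\<Prod>k\<in>F. f k (h k))) has_sum (s x * (\<Prod>k\<in>F. f k (h k)))) UNIV" for h
    using insert.prems(1)[of x] by (intro has_sum_cmult_left) auto
  have outer: "((\<lambda>h. s x * (\<Prod>k\<in>F. f k (h k))) has_sum (s x * (\<Prod>k\<in>F. s k))) (PiE F (\<lambda>_. UNIV))"
    by (intro has_sum_cmult_right IH)
  have summ: "(\<lambda>(h,y). f x y * (\<Prod>k\<in>F. f k (h k))) summable_on (PiE F (\<lambda>_. UNIV) \<times> UNIV)"
  proof (rule summable_on_SigmaI[where g="\<lambda>h. s x * (\<Prod>k\<in>F. f k (h k))"])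
    show "((\<lambda>y. (\<lambda>(h,y). f x y * (\<Prod>k\<in>F. f k (h k))) (h, y)) has_sum s x * (\<Prod>k\<in>F. f k (h k))) UNIV" for h
      using inner[of h] by simp
    show "(\<lambda>h. s x * (\<Prod>k\<in>F. f k (h k))) summable_on PiE F (\<lambda>_. UNIV)"
      using outer by (rule has_sum_imp_summable)
    show "0 \<le> (\<lambda>(h,y). f x y * (\<Prod>k\<in>F. f k (h k))) (h, y)" for h y
      using insert.prems(2) by (auto intro!: mult_nonneg_nonneg prod_nonneg)
  qed
  have "((\<lambda>(h,y). f x y * (\<Prod>k\<in>F. f k (h k))) has_sum (s x * (\<Prod>k\<in>F. s k))) (PiE F (\<lambda>_. UNIV) \<times> UNIV)"
    using has_sum_SigmaI[where f="\<lambda>(h,y). f x y * (\<Prod>k\<in>F. f k (h k))", OF _ outer summ] inner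
    by auto
  hence "(((\<lambda>h. \<Prod>k\<in>insert x F. f k (h k)) \<circ> (\<lambda>(h,y). h(x:=y))) has_sum (s x * (\<Prod>k\<in>F. s k)))
      (PiE F (\<lambda>_. UNIV) \<times> UNIV)" unfolding eq .
  hence "((\<lambda>h. \<Prod>k\<in>insert x F. f k (h k)) has_sum (s x * (\<Prod>k\<in>F. s k)))
     ((\<lambda>(h,y). h(x:=y)) ` (PiE F (\<lambda>_. UNIV) \<times> UNIV))"
    by (simp only: has_sum_reindex[OF comb(2)])
  hence "((\<lambda>h. \<Prod>k\<in>insert x F. f k (h k)) has_sum (s x * (\<Prod>k\<in>F. s k))) (PiE (insert x F) (\<lambda>_. UNIV))"
    by (simp only: comb(1))
  thus ?case using insert.hyps by simp
qed

lemma prod_has_sum_abs: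
  fixes f :: "'k \<Rightarrow> 'b \<Rightarrow> real"
  assumes "finite K" "\<And>k. k \<in> K \<Longrightarrow> (\<lambda>y. \<bar>f k y\<bar>) summable_on UNIV"
  shows "((\<lambda>h. \<Prod>k\<in>K. f k (h k)) has_sum (\<Prod>k\<in>K. infsum (f k) UNIV)) (PiE K (\<lambda>_. UNIV))"
proof -
  have "((\<lambda>h. \<Prod>k\<in>K. \<bar>f k (h k)\<bar>) has_sum (\<Prod>k\<in>K. infsum (\<lambda>y. \<bar>f k y\<bar>) UNIV)) (PiE K (\<lambda>_. UNIV))"
    using assms by (intro prod_has_sum_nonneg) auto
  hence "(\<lambda>h. \<Prod>k\<in>K. \<bar>f k (h k)\<bar>) summable_on (PiE K (\<lambda>_. UNIV))"
    by (rule has_sum_imp_summable)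
  hence "(\<lambda>h. \<Prod>k\<in>K. f k (h k)) summable_on (PiE K (\<lambda>_. UNIV))"
    by (rule summable_bound) (simp add: abs_prod)
  moreover have "infsum (\<lambda>h. \<Prod>k\<in>K. f k (h k)) (PiE K (\<lambda>_. UNIV)) = (\<Prod>k\<in>K. infsum (f k) UNIV)"
    by (rule infsum_prod_PiE_abs[OF assms(1)]) (simp add: assms(2))
  ultimately show ?thesis by (metis has_sum_infsum)
qed

lemma lists_PiE_bij:
  "bij_betw (\<lambda>ys. restrict (\<lambda>j. ys ! j) {..<n}) {ys. length ys = n} (PiE {..<n} (\<lambda>_. UNIV))"
proof (rule bij_betwI[where g="\<lambda>h. map h [0..<n]"])
  show "(\<lambda>ys. restrict ((!) ys) {..<n}) \<in> {ys. length ys = n} \<rightarrow> PiE {..<n} (\<lambda>_. UNIV)" by auto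
  show "(\<lambda>h. map h [0..<n]) \<in> PiE {..<n} (\<lambda>_. UNIV) \<rightarrow> {ys. length ys = n}" by auto
  show "map (restrict ((!) x) {..<n}) [0..<n] = x" if "x \<in> {ys. length ys = n}" for x
    using that by (auto intro: nth_equalityI)
  show "restrict ((!) (map y [0..<n])) {..<n} = y" if "y \<in> PiE {..<n} (\<lambda>_. UNIV)" for y
    using that by (auto simp: fun_eq_iff PiE_def extensional_def)
qed

lemma has_sum_lists_PiE:
  assumes "\<And>ys. length ys = n \<Longrightarrow> F ys = G (restrict (\<lambda>j. ys ! j) {..<n})"
  shows "(F has_sum s) {ys. length ys = n} \<longleftrightarrow> (G has_sum s) (PiE {..<n} (\<lambda>_. UNIV))"
proof -
  have "(F has_sum s) {ys. length ys = n} \<longleftrightarrow> ((\<lambda>ys. G (restrict (\<lambda>j. ys ! j) {..<n})) has_sum s) {ys. length ys = n}"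
    using assms by (intro has_sum_cong) auto
  also have "\<dots> \<longleftrightarrow> (G has_sum s) (PiE {..<n} (\<lambda>_. UNIV))"
    using has_sum_reindex_bij_betw[OF lists_PiE_bij] by blast
  finally show ?thesis .
qed

lemma list_prod_has_sum_nonneg:
  fixes f :: "nat \<Rightarrow> 'b \<Rightarrow> real"
  assumes "\<And>k. k < n \<Longrightarrow> (f k has_sum s k) UNIV" "\<And>k y. k < n \<Longrightarrow> f k y \<ge> 0"
  shows "((\<lambda>ys. \<Prod>k<n. f k (ys ! k)) has_sum (\<Prod>k<n. s k)) {ys. length ys = n}"
  by (subst has_sum_lists_PiE[where G="\<lambda>h. \<Prod>k<n. f k (h k)"])
     (auto intro!: prod_has_sum_nonneg assms prod.cong)

lemma list_prod_has_sum_abs: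
  fixes f :: "nat \<Rightarrow> 'b \<Rightarrow> real"
  assumes "\<And>k. k < n \<Longrightarrow> (\<lambda>y. \<bar>f k y\<bar>) summable_on UNIV"
  shows "((\<lambda>ys. \<Prod>k<n. f k (ys ! k)) has_sum (\<Prod>k<n. infsum (f k) UNIV)) {ys. length ys = n}"
  by (subst has_sum_lists_PiE[where G="\<lambda>h. \<Prod>k<n. f k (h k)"])
     (auto intro!: prod_has_sum_abs assms prod.cong)


definition chanp :: "('b \<Rightarrow> real) \<Rightarrow> ('b \<Rightarrow> real) \<Rightarrow> bool" where
  "chanp A B \<longleftrightarrow> (\<forall>y. A y \<ge> 0 \<and> B y \<ge> 0) \<and> (A has_sum 1) UNIV \<and> (B has_sum 1) UNIV"

definition KKs :: "('b \<Rightarrow> real) \<Rightarrow> ('b \<Rightarrow> real) \<Rightarrow> real" where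
  "KKs A B = (\<Sum>\<^sub>\<infinity>y. KK (A y) (B y))"

definition psi :: "real \<Rightarrow> real \<Rightarrow> real \<Rightarrow> real \<Rightarrow> real" where
  "psi p q P Q = p * xl P + q * xl Q - xl (p*P + q*Q) + (p*P + q*Q) * log 2 (p + q)"

lemma EE_psi:
  assumes "p \<ge> 0" "q \<ge> 0" "P \<ge> 0" "Q \<ge> 0"
  shows "EE (p*P) (q*Q) = P * xl p + Q * xl q - (p*P + q*Q) * log 2 (p + q) + psi p q P Q"
  using assms by (simp add: EE_def psi_def xl_mult algebra_simps)

lemma has_sum_diff':
  fixes f :: "'a \<Rightarrow> real"
  shows "(f has_sum a) A \<Longrightarrow> (g has_sum b) A \<Longrightarrow> ((\<lambda>x. f x - g x) has_sum (a - b)) A"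
proof -
  assume f: "(f has_sum a) A" and g: "(g has_sum b) A"
  have "((\<lambda>x. - g x) has_sum (-b)) A" using g by (rule has_sum_uminusI)
  hence "((\<lambda>x. f x + - g x) has_sum (a + - b)) A" using f by (intro has_sum_add)
  thus ?thesis by simp
qed

lemma KK_nonneg: "P \<ge> 0 \<Longrightarrow> Q \<ge> 0 \<Longrightarrow> KK P Q \<ge> 0"
  unfolding KK_def using EE_ge[of P Q] by (simp add: field_simps)

lemma KK_le: "P \<ge> 0 \<Longrightarrow> Q \<ge> 0 \<Longrightarrow> KK P Q \<le> P + Q"
  unfolding KK_def using EE_le0[of P Q] by (simp add: field_simps)

lemma abs_KK: "P \<ge> 0 \<Longrightarrow> Q \<ge> 0 \<Longrightarrow> \<bar>KK P Q\<bar> \<le> P + Q"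
  using KK_nonneg KK_le by (metis abs_of_nonneg)

lemma KK_summable:
  assumes "chanp A B"
  shows "(\<lambda>y. KK (A y) (B y)) summable_on UNIV"
proof -
  have AB: "((\<lambda>y. A y + B y) has_sum 2) UNIV" using assms unfolding chanp_def
    using has_sum_add by fastforce
  have "(\<lambda>y. KK (A y) (B y)) summable_on UNIV"
    apply (rule summable_bound[where g="\<lambda>y. A y + B y"])
    using AB apply (auto simp: summable_on_def)[1]
    using assms abs_KK unfolding chanp_def by blast
  thus ?thesis .
qed

lemma KKs_nonneg: "chanp A B \<Longrightarrow> KKs A B \<ge> 0"
  unfolding KKs_def chanp_def by (intro infsum_nonneg KK_nonneg) auto

lemma KKs_sym: "KKs A B = KKs B A"
  unfolding KKs_def KK_def by (simp add: EE_sym add.commute)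

lemma EE_same: "a \<ge> 0 \<Longrightarrow> EE a a = - 2 * a"
proof -
  assume a: "a \<ge> 0"
  have "xl (2 * a) = 2 * xl a + a * xl 2" using xl_mult[of 2 a] a by simp
  moreover have "xl 2 = 2" by (simp add: xl_def)
  ultimately show ?thesis by (simp add: EE_def)
qed

lemma KKs_same: "chanp A A \<Longrightarrow> KKs A A = 0"
  unfolding KKs_def KK_def chanp_def by (simp add: EE_same)

lemma DP_point:
  assumes ch: "chanp A B" and p: "p \<ge> 0" and q: "q \<ge> 0"
  shows "((\<lambda>y. EE (p * A y) (q * B y)) has_sum (EE p q + (\<Sum>\<^sub>\<infinity>y. psi p q (A y) (B y)))) UNIV"
    and "(\<Sum>\<^sub>\<infinity>y. psi p q (A y) (B y)) \<ge> 2 * min p q * KKs A B"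
proof -
  have A0: "\<And>y. A y \<ge> 0" and B0: "\<And>y. B y \<ge> 0" and A1: "(A has_sum 1) UNIV" and B1: "(B has_sum 1) UNIV"
    using ch by (auto simp: chanp_def)
  have s1: "((\<lambda>y. p * A y + q * B y) has_sum (p + q)) UNIV"
    using has_sum_add[OF has_sum_cmult_right[OF A1, of p] has_sum_cmult_right[OF B1, of q]] by simp
  have sE: "(\<lambda>y. EE (p * A y) (q * B y)) summable_on UNIV"
    by (rule summable_bound[where g="\<lambda>y. p * A y + q * B y"])
       (use s1 in \<open>auto simp: summable_on_def intro!: abs_EE mult_nonneg_nonneg A0 B0 p q\<close>)
  define V where "V = (\<Sum>\<^sub>\<infinity>y. EE (p * A y) (q * B y))"
  have hE: "((\<lambda>y. EE (p * A y) (q * B y)) has_sum V) UNIV" using sE V_def by auto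
  have h1: "((\<lambda>y. A y * xl p + B y * xl q - (p * A y + q * B y) * log 2 (p + q)) has_sum
        (xl p + xl q - (p + q) * log 2 (p + q))) UNIV"
    by (intro has_sum_diff' has_sum_add has_sum_cmult_left A1 B1 s1[THEN has_sum_cmult_left, of "log 2 (p+q)", simplified])
       (auto intro: has_sum_cmult_left[OF A1, simplified] has_sum_cmult_left[OF B1, simplified])
  have psi_eq: "psi p q (A y) (B y) = EE (p * A y) (q * B y) - (A y * xl p + B y * xl q - (p * A y + q * B y) * log 2 (p + q))" for y
    using EE_psi[OF p q A0[of y] B0[of y]] by simp
  have hpsi: "((\<lambda>y. psi p q (A y) (B y)) has_sum (V - (xl p + xl q - (p + q) * log 2 (p + q)))) UNIV"
    unfolding psi_eq by (intro has_sum_diff' hE h1)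
  have "V - (xl p + xl q - (p + q) * log 2 (p + q)) = V - EE p q" by (simp add: EE_def xl_def)
  hence Vpsi: "(\<Sum>\<^sub>\<infinity>y. psi p q (A y) (B y)) = V - EE p q" using hpsi infsumI by metis
  have EEx: "EE p q = xl p + xl q - (p + q) * log 2 (p + q)" by (simp add: EE_def xl_def)
  show "((\<lambda>y. EE (p * A y) (q * B y)) has_sum (EE p q + (\<Sum>\<^sub>\<infinity>y. psi p q (A y) (B y)))) UNIV"
    using hE Vpsi by simp
  have hK: "((\<lambda>y. 2 * min p q * KK (A y) (B y)) has_sum (2 * min p q * KKs A B)) UNIV"
    unfolding KKs_def by (intro has_sum_cmult_right) (use KK_summable[OF ch] in auto)
  show "(\<Sum>\<^sub>\<infinity>y. psi p q (A y) (B y)) \<ge> 2 * min p q * KKs A B"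
    using has_sum_mono[OF hK hpsi] psi_ineq[OF p q A0 B0] Vpsi EEx unfolding psi_def by auto
qed

lemma DP:
  fixes p q :: "'z \<Rightarrow> real"
  assumes ch: "chanp A B" and p0: "\<And>z. z \<in> S \<Longrightarrow> p z \<ge> 0" and q0: "\<And>z. z \<in> S \<Longrightarrow> q z \<ge> 0"
    and ps: "p summable_on S" and qs: "q summable_on S"
  shows "(\<lambda>(z,y). EE (p z * A y) (q z * B y)) summable_on (S \<times> UNIV)"
    and "(\<Sum>\<^sub>\<infinity>(z,y)\<in>S \<times> UNIV. EE (p z * A y) (q z * B y))
      \<ge> (\<Sum>\<^sub>\<infinity>z\<in>S. EE (p z) (q z)) + 2 * KKs A B * (\<Sum>\<^sub>\<infinity>z\<in>S. min (p z) (q z))"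
proof -
  have A0: "\<And>y. A y \<ge> 0" and B0: "\<And>y. B y \<ge> 0" and A1: "(A has_sum 1) UNIV" and B1: "(B has_sum 1) UNIV"
    using ch by (auto simp: chanp_def)
  have inner: "((\<lambda>y. p z * A y + q z * B y) has_sum (p z + q z)) UNIV" for z
    using has_sum_add[OF has_sum_cmult_right[OF A1, of "p z"] has_sum_cmult_right[OF B1, of "q z"]] by simp
  have pqs: "(\<lambda>z. p z + q z) summable_on S" using ps qs by (rule summable_on_add)
  have bnd: "(\<lambda>(z,y). p z * A y + q z * B y) summable_on (S \<times> UNIV)"
    using summable_on_SigmaI[where A=S and B="\<lambda>_. UNIV" and f="\<lambda>(z,y). p z * A y + q z * B y"
        and g="\<lambda>z. p z + q z"] inner pqs p0 q0 A0 B0 by auto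
  show sm: "(\<lambda>(z,y). EE (p z * A y) (q z * B y)) summable_on (S \<times> UNIV)"
    by (rule summable_bound[OF bnd]) (auto intro!: abs_EE mult_nonneg_nonneg A0 B0 p0 q0)
  have eq: "(\<Sum>\<^sub>\<infinity>(z,y)\<in>S \<times> UNIV. EE (p z * A y) (q z * B y))
       = (\<Sum>\<^sub>\<infinity>z\<in>S. \<Sum>\<^sub>\<infinity>y. EE (p z * A y) (q z * B y))"
    using infsum_Sigma'_banach[OF sm] by simp
  have ss: "(\<lambda>z. \<Sum>\<^sub>\<infinity>y. EE (p z * A y) (q z * B y)) summable_on S"
    using summable_on_Sigma_banach[OF sm] by simp
  have pt: "(\<Sum>\<^sub>\<infinity>y. EE (p z * A y) (q z * B y)) \<ge> EE (p z) (q z) + 2 * KKs A B * min (p z) (q z)"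
    if "z \<in> S" for z
  proof -
    note d = DP_point[OF ch p0[OF that] q0[OF that]]
    have "(\<Sum>\<^sub>\<infinity>y. EE (p z * A y) (q z * B y)) = EE (p z) (q z) + (\<Sum>\<^sub>\<infinity>y. psi (p z) (q z) (A y) (B y))"
      using d(1) by (rule infsumI)
    moreover have "2 * KKs A B * min (p z) (q z) = 2 * min (p z) (q z) * KKs A B" by simp
    ultimately show ?thesis using d(2) by linarith
  qed
  have sEE: "(\<lambda>z. EE (p z) (q z)) summable_on S"
    by (rule summable_bound[OF pqs]) (auto intro!: abs_EE p0 q0)
  have smin: "(\<lambda>z. min (p z) (q z)) summable_on S"
    by (rule summable_bound[OF ps]) (use p0 q0 in auto)
  have "(\<Sum>\<^sub>\<infinity>z\<in>S. EE (p z) (q z) + 2 * KKs A B * min (p z) (q z))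
      = (\<Sum>\<^sub>\<infinity>z\<in>S. EE (p z) (q z)) + 2 * KKs A B * (\<Sum>\<^sub>\<infinity>z\<in>S. min (p z) (q z))"
    using sEE smin by (simp add: infsum_add summable_on_cmult_right infsum_cmult_right')
  moreover have "(\<Sum>\<^sub>\<infinity>z\<in>S. EE (p z) (q z) + 2 * KKs A B * min (p z) (q z))
      \<le> (\<Sum>\<^sub>\<infinity>z\<in>S. \<Sum>\<^sub>\<infinity>y. EE (p z * A y) (q z * B y))"
    by (intro infsum_mono pt ss summable_on_add sEE summable_on_cmult_right smin)
  ultimately show "(\<Sum>\<^sub>\<infinity>(z,y)\<in>S \<times> UNIV. EE (p z * A y) (q z * B y))
      \<ge> (\<Sum>\<^sub>\<infinity>z\<in>S. EE (p z) (q z)) + 2 * KKs A B * (\<Sum>\<^sub>\<infinity>z\<in>S. min (p z) (q z))"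
    using eq by simp
qed


definition Tf :: "(bool \<Rightarrow> 'b \<Rightarrow> real) \<Rightarrow> (nat \<Rightarrow> bool) \<Rightarrow> (nat \<Rightarrow> bool) \<Rightarrow> nat set \<Rightarrow> real" where
  "Tf C c0 c1 K = (\<Sum>\<^sub>\<infinity>h\<in>PiE K (\<lambda>_. UNIV). EE (\<Prod>j\<in>K. C (c0 j) (h j)) (\<Prod>j\<in>K. C (c1 j) (h j)))"

lemma chanp_any: "chanp (C False) (C True) \<Longrightarrow> chanp (C a) (C b)"
  unfolding chanp_def by (cases a; cases b) auto

lemma prod_C_has_sum:
  assumes "chanp (C False) (C True)" "finite K"
  shows "((\<lambda>h. \<Prod>j\<in>K. C (c j) (h j)) has_sum 1) (PiE K (\<lambda>_. UNIV))"
  using prod_has_sum_nonneg[of K "\<lambda>j. C (c j)" "\<lambda>_. 1"] assms chanp_any[OF assms(1), of "c _" "c _"]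
  unfolding chanp_def by auto

lemma Tf_insert:
  fixes C :: "bool \<Rightarrow> 'b \<Rightarrow> real"
  assumes ch: "chanp (C False) (C True)" and K: "finite K" "k \<notin> K"
  shows "Tf C c0 c1 (insert k K) \<ge> Tf C c0 c1 K + 2 * KKs (C (c0 k)) (C (c1 k))
     * (\<Sum>\<^sub>\<infinity>h\<in>PiE K (\<lambda>_. UNIV). min (\<Prod>j\<in>K. C (c0 j) (h j)) (\<Prod>j\<in>K. C (c1 j) (h j)))"
proof -
  define p where "p h = (\<Prod>j\<in>K. C (c0 j) (h j))" for h :: "nat \<Rightarrow> 'b"
  define q where "q h = (\<Prod>j\<in>K. C (c1 j) (h j))" for h :: "nat \<Rightarrow> 'b"
  note comb = PiE_insert_comb[OF K(2), where 'b='b]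
  have C0: "C a y \<ge> 0" for a y using ch chanp_any[OF ch, of a a] unfolding chanp_def by auto
  have pr: "(\<Prod>j\<in>insert k K. C (c j) ((h(k:=y)) j)) = C (c k) y * (\<Prod>j\<in>K. C (c j) (h j))" for c h y
  proof -
    have "(\<Prod>j\<in>K. C (c j) ((h(k:=y)) j)) = (\<Prod>j\<in>K. C (c j) (h j))"
      using K by (intro prod.cong) auto
    thus ?thesis using K by simp
  qed
  have "Tf C c0 c1 (insert k K) = (\<Sum>\<^sub>\<infinity>(h,y)\<in>PiE K (\<lambda>_. UNIV) \<times> UNIV.
        EE (\<Prod>j\<in>insert k K. C (c0 j) ((h(k:=y)) j)) (\<Prod>j\<in>insert k K. C (c1 j) ((h(k:=y)) j)))"
    unfolding Tf_def comb(1) by (subst infsum_reindex[OF comb(2)]) (simp add: o_def case_prod_unfold)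
  also have "\<dots> = (\<Sum>\<^sub>\<infinity>(h,y)\<in>PiE K (\<lambda>_. UNIV) \<times> UNIV. EE (p h * C (c0 k) y) (q h * C (c1 k) y))"
    unfolding pr p_def q_def by (simp add: mult.commute)
  also have "\<dots> \<ge> (\<Sum>\<^sub>\<infinity>h\<in>PiE K (\<lambda>_. UNIV). EE (p h) (q h)) + 2 * KKs (C (c0 k)) (C (c1 k))
       * (\<Sum>\<^sub>\<infinity>h\<in>PiE K (\<lambda>_. UNIV). min (p h) (q h))"
  proof (rule DP(2))
    show "chanp (C (c0 k)) (C (c1 k))" using chanp_any[OF ch] .
    show "p summable_on PiE K (\<lambda>_. UNIV)" unfolding p_def
      using prod_C_has_sum[OF ch K(1)] has_sum_imp_summable by blast
    show "q summable_on PiE K (\<lambda>_. UNIV)" unfolding q_def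
      using prod_C_has_sum[OF ch K(1)] has_sum_imp_summable by blast
  qed (auto simp: p_def q_def intro!: prod_nonneg C0)
  finally show ?thesis unfolding Tf_def p_def q_def .
qed

lemma Tf_empty: "Tf C c0 c1 {} = -2"
  by (simp add: Tf_def EE_same)

lemma Tf_mono_aux:
  assumes ch: "chanp (C False) (C True)" and "finite D" "finite K1" "D \<inter> K1 = {}"
  shows "Tf C c0 c1 K1 \<le> Tf C c0 c1 (K1 \<union> D)"
  using assms(2-4)
proof (induction D rule: finite_induct)
  case empty thus ?case by simp
next
  case (insert x F)
  have "Tf C c0 c1 (insert x (K1 \<union> F)) \<ge> Tf C c0 c1 (K1 \<union> F) + 2 * KKs (C (c0 x)) (C (c1 x))
     * (\<Sum>\<^sub>\<infinity>h\<in>PiE (K1 \<union> F) (\<lambda>_. UNIV). min (\<Prod>j\<in>K1 \<union> F. C (c0 j) (h j)) (\<Prod>j\<in>K1 \<union> F. C (c1 j) (h j)))"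
    using insert by (intro Tf_insert ch) auto
  moreover have "KKs (C (c0 x)) (C (c1 x)) \<ge> 0" by (rule KKs_nonneg[OF chanp_any[OF ch]])
  moreover have "(\<Sum>\<^sub>\<infinity>h\<in>PiE (K1 \<union> F) (\<lambda>_. UNIV). min (\<Prod>j\<in>K1 \<union> F. C (c0 j) (h j)) (\<Prod>j\<in>K1 \<union> F. C (c1 j) (h j))) \<ge> 0"
    using ch chanp_any[OF ch] unfolding chanp_def by (intro infsum_nonneg) (auto intro!: prod_nonneg)
  ultimately have ge: "Tf C c0 c1 (insert x (K1 \<union> F)) \<ge> Tf C c0 c1 (K1 \<union> F)"
    by (smt (verit) mult_nonneg_nonneg)
  have eq: "insert x (K1 \<union> F) = K1 \<union> insert x F" by auto
  have IH: "Tf C c0 c1 K1 \<le> Tf C c0 c1 (K1 \<union> F)" using insert.IH insert.prems by blast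
  show ?case using IH ge eq by (metis order_trans)
qed

lemma Tf_mono:
  assumes ch: "chanp (C False) (C True)" and "finite K2" "K1 \<subseteq> K2"
  shows "Tf C c0 c1 K1 \<le> Tf C c0 c1 K2"
proof -
  have "K2 = K1 \<union> (K2 - K1)" using assms by auto
  moreover have "Tf C c0 c1 K1 \<le> Tf C c0 c1 (K1 \<union> (K2 - K1))"
    using assms by (intro Tf_mono_aux) (auto intro: finite_subset)
  ultimately show ?thesis by simp
qed

lemma KKs_C:
  assumes "chanp (C False) (C True)" "a \<noteq> b"
  shows "KKs (C a) (C b) = KKs (C False) (C True)"
  using assms KKs_sym by (cases a; cases b) auto

lemma Tf_single:
  assumes ch: "chanp (C False) (C True)" and "c0 k \<noteq> c1 k"
  shows "Tf C c0 c1 {k} \<ge> -2 + 2 * KKs (C False) (C True)"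
  using Tf_insert[OF ch, of "{}" k c0 c1] Tf_empty[of C c0 c1] KKs_C[OF ch assms(2)] by simp

lemma PiE_single_bij: "bij_betw (\<lambda>h. h i) (PiE {i} (\<lambda>_. UNIV)) UNIV"
proof (rule bij_betwI[where g="\<lambda>y. (\<lambda>j. if j = i then y else undefined)"])
  show "(\<lambda>h. h i) \<in> PiE {i} (\<lambda>_. UNIV) \<rightarrow> UNIV" by auto
  show "(\<lambda>y. \<lambda>j. if j = i then y else undefined) \<in> UNIV \<rightarrow> PiE {i} (\<lambda>_. UNIV)"
    by (auto simp: PiE_def extensional_def)
  show "(\<lambda>j. if j = i then x i else undefined) = x" if "x \<in> PiE {i} (\<lambda>_. UNIV)" for x
    using that by (auto simp: fun_eq_iff PiE_def extensional_def)
  show "(\<lambda>j. if j = i then y else undefined) i = y" for y by simp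
qed

lemma Tf_pair:
  assumes ch: "chanp (C False) (C True)" and "c0 i \<noteq> c1 i" "c0 k \<noteq> c1 k" "i \<noteq> k"
  shows "Tf C c0 c1 {i, k} \<ge> -2 + 2 * KKs (C False) (C True)
      + 2 * KKs (C False) (C True) * (\<Sum>\<^sub>\<infinity>y. min (C False y) (C True y))"
proof -
  have "Tf C c0 c1 (insert k {i}) \<ge> Tf C c0 c1 {i} + 2 * KKs (C (c0 k)) (C (c1 k))
     * (\<Sum>\<^sub>\<infinity>h\<in>PiE {i} (\<lambda>_. UNIV). min (\<Prod>j\<in>{i}. C (c0 j) (h j)) (\<Prod>j\<in>{i}. C (c1 j) (h j)))"
    using assms by (intro Tf_insert) auto
  moreover have "(\<Sum>\<^sub>\<infinity>h\<in>PiE {i} (\<lambda>_. UNIV). min (\<Prod>j\<in>{i}. C (c0 j) (h j)) (\<Prod>j\<in>{i}. C (c1 j) (h j)))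
      = (\<Sum>\<^sub>\<infinity>y. min (C (c0 i) y) (C (c1 i) y))"
    using infsum_reindex_bij_betw[OF PiE_single_bij[of i], of "\<lambda>y. min (C (c0 i) y) (C (c1 i) y)"] by simp
  moreover have "(\<Sum>\<^sub>\<infinity>y. min (C (c0 i) y) (C (c1 i) y)) = (\<Sum>\<^sub>\<infinity>y. min (C False y) (C True y))"
    using assms(2) by (cases "c0 i") (auto simp: min.commute)
  moreover have "insert k {i} = {i, k}" by auto
  moreover have "Tf C c0 c1 {i} \<ge> -2 + 2 * KKs (C False) (C True)" using Tf_single[of C c0 i c1] ch assms(2) by blast
  ultimately show ?thesis using KKs_C[OF ch assms(3)] by simp
qed


abbreviation LL :: "nat \<Rightarrow> bool list set" where "LL n \<equiv> {u. length u = n}"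

lemma finite_LL[simp]: "finite (LL n)"
  using finite_lists_length_eq[of "UNIV :: bool set" n] by simp

lemma card_LL: "card (LL n) = 2 ^ n"
  using card_lists_length_eq[of "UNIV :: bool set" n] by simp

lemma sumL_Cons: "(\<Sum>u\<in>LL (Suc n). f u) = (\<Sum>u\<in>LL n. f (False # u) + f (True # u))"
proof -
  have e: "LL (Suc n) = (\<lambda>(u,b). b # u) ` (LL n \<times> UNIV)"
    using lists_length_Suc_eq[of "UNIV :: bool set" n] by simp
  have i: "inj_on (\<lambda>(u,b). b # u) (LL n \<times> (UNIV :: bool set))" by (auto simp: inj_on_def)
  have "(\<Sum>u\<in>LL (Suc n). f u) = (\<Sum>(u,b)\<in>LL n \<times> UNIV. f (b # u))"
    unfolding e by (subst sum.reindex[OF i]) (simp add: case_prod_unfold)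
  also have "\<dots> = (\<Sum>u\<in>LL n. \<Sum>b\<in>UNIV. f (b # u))" by (rule sum.cartesian_product[symmetric])
  also have "\<dots> = (\<Sum>u\<in>LL n. f (False # u) + f (True # u))" by (simp add: UNIV_bool add.commute)
  finally show ?thesis .
qed

lemma sumL_snoc: "(\<Sum>u\<in>LL (Suc n). f u) = (\<Sum>u\<in>LL n. f (u @ [False]) + f (u @ [True]))"
proof -
  have e: "LL (Suc n) = (\<lambda>(u,b). u @ [b]) ` (LL n \<times> UNIV)"
  proof
    show "LL (Suc n) \<subseteq> (\<lambda>(u,b). u @ [b]) ` (LL n \<times> UNIV)"
    proof
      fix x assume "x \<in> LL (Suc n)"
      hence "x = butlast x @ [last x]" "butlast x \<in> LL n"
        by (auto intro!: append_butlast_last_id[symmetric])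
      thus "x \<in> (\<lambda>(u,b). u @ [b]) ` (LL n \<times> UNIV)" by (metis (no_types, lifting) SigmaI UNIV_I case_prod_conv image_eqI)
    qed
  qed auto
  have i: "inj_on (\<lambda>(u,b). u @ [b]) (LL n \<times> (UNIV :: bool set))" by (auto simp: inj_on_def)
  have "(\<Sum>u\<in>LL (Suc n). f u) = (\<Sum>(u,b)\<in>LL n \<times> UNIV. f (u @ [b]))"
    unfolding e by (subst sum.reindex[OF i]) (simp add: case_prod_unfold)
  also have "\<dots> = (\<Sum>u\<in>LL n. \<Sum>b\<in>UNIV. f (u @ [b]))" by (rule sum.cartesian_product[symmetric])
  also have "\<dots> = (\<Sum>u\<in>LL n. f (u @ [False]) + f (u @ [True]))" by (simp add: UNIV_bool add.commute)
  finally show ?thesis .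
qed

definition SS :: "(bool list \<Rightarrow> real) \<Rightarrow> nat \<Rightarrow> bool list \<Rightarrow> real" where
  "SS w n pre = (\<Sum>v\<in>LL (n - length pre). w (pre @ v))"

lemma SS_split:
  assumes "length pre < n"
  shows "SS w n pre = SS w n (pre @ [False]) + SS w n (pre @ [True])"
proof -
  obtain m where m: "n - length pre = Suc m" using assms by (metis Suc_diff_Suc)
  hence m2: "n - length (pre @ [b]) = m" for b by simp
  show ?thesis unfolding SS_def m m2 by (simp add: sumL_Cons sum.distrib)
qed

lemma SS_full: "length u = n \<Longrightarrow> SS w n u = w u"
  by (simp add: SS_def)

lemma telescope:
  "(\<Sum>i<n. \<Sum>us\<in>LL i. EE (SS w n (us @ [False])) (SS w n (us @ [True])))
     = (\<Sum>u\<in>LL n. xl (w u)) - xl (SS w n [])"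
proof -
  define \<Phi> where "\<Phi> i = (\<Sum>us\<in>LL i. xl (SS w n us))" for i
  have step: "(\<Sum>us\<in>LL i. EE (SS w n (us @ [False])) (SS w n (us @ [True]))) = \<Phi> (Suc i) - \<Phi> i"
    if "i < n" for i
  proof -
    have "\<Phi> (Suc i) = (\<Sum>us\<in>LL i. xl (SS w n (us @ [False])) + xl (SS w n (us @ [True])))"
      unfolding \<Phi>_def by (rule sumL_snoc)
    moreover have "\<Phi> i = (\<Sum>us\<in>LL i. xl (SS w n (us @ [False]) + SS w n (us @ [True])))"
      unfolding \<Phi>_def using that by (intro sum.cong) (auto simp: SS_split[symmetric])
    ultimately show ?thesis by (simp add: EE_def sum_subtractf)
  qed
  have "(\<Sum>i<n. \<Sum>us\<in>LL i. EE (SS w n (us @ [False])) (SS w n (us @ [True]))) = (\<Sum>i<n. \<Phi> (Suc i) - \<Phi> i)"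
    by (intro sum.cong) (auto simp: step)
  also have "\<dots> = \<Phi> n - \<Phi> 0" by (rule sum_lessThan_telescope)
  also have "\<Phi> n = (\<Sum>u\<in>LL n. xl (w u))" unfolding \<Phi>_def by (intro sum.cong) (auto simp: SS_full)
  also have "\<Phi> 0 = xl (SS w n [])" by (simp add: \<Phi>_def)
  finally show ?thesis .
qed

lemma sumL_prod:
  fixes f :: "nat \<Rightarrow> bool \<Rightarrow> real"
  shows "(\<Sum>x\<in>LL n. \<Prod>j<n. f j (x ! j)) = (\<Prod>j<n. f j False + f j True)"
proof -
  have "(\<Sum>x\<in>LL n. \<Prod>j<n. f j (x ! j)) = (\<Sum>h\<in>PiE {..<n} (\<lambda>_. UNIV). \<Prod>j<n. f j (h j))"
  proof (rule sum.reindex_bij_witness[where i="\<lambda>h. map h [0..<n]" and j="\<lambda>x. restrict (\<lambda>j. x ! j) {..<n}"])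
    show "map (restrict ((!) a) {..<n}) [0..<n] = a" if "a \<in> LL n" for a
      using that by (auto intro: nth_equalityI)
    show "restrict ((!) (map b [0..<n])) {..<n} = b" if "b \<in> PiE {..<n} (\<lambda>_. UNIV)" for b
      using that by (auto simp: fun_eq_iff PiE_def extensional_def)
  qed (auto intro!: prod.cong)
  also have "\<dots> = (\<Prod>j<n. \<Sum>b\<in>UNIV. f j b)" by (rule prod_sum_PiE[symmetric]) auto
  also have "\<dots> = (\<Prod>j<n. f j False + f j True)" by (simp add: UNIV_bool add.commute)
  finally show ?thesis .
qed

lemma xl_prod:
  assumes "finite K" "\<And>j. j \<in> K \<Longrightarrow> a j \<ge> 0"
  shows "xl (\<Prod>j\<in>K. a j) = (\<Sum>k\<in>K. (\<Prod>j\<in>K - {k}. a j) * xl (a k))"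
  using assms
proof (induction K rule: finite_induct)
  case empty thus ?case by simp
next
  case (insert x F)
  have "xl (\<Prod>j\<in>insert x F. a j) = xl (a x * (\<Prod>j\<in>F. a j))" using insert by simp
  also have "\<dots> = a x * xl (\<Prod>j\<in>F. a j) + (\<Prod>j\<in>F. a j) * xl (a x)"
    using insert by (intro xl_mult) (auto intro: prod_nonneg)
  also have "\<dots> = (\<Sum>k\<in>F. a x * (\<Prod>j\<in>F - {k}. a j) * xl (a k)) + (\<Prod>j\<in>F. a j) * xl (a x)"
    using insert by (simp add: sum_distrib_left mult.assoc)
  also have "(\<Sum>k\<in>F. a x * (\<Prod>j\<in>F - {k}. a j) * xl (a k)) = (\<Sum>k\<in>F. (\<Prod>j\<in>insert x F - {k}. a j) * xl (a k))"
  proof (intro sum.cong refl)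
    fix k assume "k \<in> F"
    hence "insert x F - {k} = insert x (F - {k})" "x \<notin> F - {k}" using insert by auto
    thus "a x * (\<Prod>j\<in>F - {k}. a j) * xl (a k) = (\<Prod>j\<in>insert x F - {k}. a j) * xl (a k)"
      using insert by simp
  qed
  also have "(\<Prod>j\<in>F. a j) = (\<Prod>j\<in>insert x F - {x}. a j)" using insert by simp
  finally show ?case using insert by (simp add: add.commute)
qed

lemma prod_pick:
  fixes n k :: nat and b :: real
  assumes "k < n"
  shows "(\<Prod>j<n. (if j = k then b else c j)) = b * (\<Prod>j\<in>{..<n} - {k}. c j)"
proof -
  have "(\<Prod>j<n. (if j = k then b else c j)) = (if k = k then b else c k) * (\<Prod>j\<in>{..<n} - {k}. (if j = k then b else c j))"
    by (rule prod.remove) (use assms in auto)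
  also have "(\<Prod>j\<in>{..<n} - {k}. (if j = k then b else c j)) = (\<Prod>j\<in>{..<n} - {k}. c j)"
    by (intro prod.cong) auto
  finally show ?thesis by simp
qed

lemma perys_identity:
  assumes a0: "\<And>j b. a j b \<ge> 0"
  shows "(\<Sum>x\<in>LL n. xl (\<Prod>j<n. a j (x ! j))) - xl (\<Prod>j<n. a j False + a j True)
    = (\<Sum>k<n. \<Prod>j<n. (if j = k then EE (a k False) (a k True) else a j False + a j True))"
proof -
  define M where "M j = a j False + a j True" for j
  have M0: "M j \<ge> 0" for j using a0 by (simp add: M_def add_nonneg_nonneg)
  have "(\<Sum>x\<in>LL n. xl (\<Prod>j<n. a j (x ! j)))
      = (\<Sum>x\<in>LL n. \<Sum>k<n. (\<Prod>j\<in>{..<n} - {k}. a j (x ! j)) * xl (a k (x ! k)))"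
    by (intro sum.cong refl xl_prod) (auto intro: a0)
  also have "\<dots> = (\<Sum>k<n. \<Sum>x\<in>LL n. \<Prod>j<n. (if j = k then xl (a k (x ! k)) else a j (x ! j)))"
    by (subst sum.swap) (auto intro!: sum.cong simp: prod_pick mult.commute)
  also have "\<dots> = (\<Sum>k<n. \<Prod>j<n. (if j = k then xl (a k False) + xl (a k True) else M j))"
  proof (intro sum.cong refl)
    fix k
    have "(\<Sum>x\<in>LL n. \<Prod>j<n. (if j = k then xl (a k (x ! k)) else a j (x ! j)))
        = (\<Sum>x\<in>LL n. \<Prod>j<n. (\<lambda>j b. if j = k then xl (a k b) else a j b) j (x ! j))"
      by (intro sum.cong prod.cong) auto
    also have "\<dots> = (\<Prod>j<n. (if j = k then xl (a k False) else a j False) + (if j = k then xl (a k True) else a j True))"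
      by (rule sumL_prod)
    also have "\<dots> = (\<Prod>j<n. (if j = k then xl (a k False) + xl (a k True) else M j))"
      by (intro prod.cong) (auto simp: M_def)
    finally show "(\<Sum>x\<in>LL n. \<Prod>j<n. (if j = k then xl (a k (x ! k)) else a j (x ! j)))
        = (\<Prod>j<n. (if j = k then xl (a k False) + xl (a k True) else M j))" .
  qed
  also have "\<dots> = (\<Sum>k<n. (xl (a k False) + xl (a k True)) * (\<Prod>j\<in>{..<n} - {k}. M j))"
    by (intro sum.cong refl) (simp add: prod_pick)
  finally have A: "(\<Sum>x\<in>LL n. xl (\<Prod>j<n. a j (x ! j))) = (\<Sum>k<n. (xl (a k False) + xl (a k True)) * (\<Prod>j\<in>{..<n} - {k}. M j))" .
  have B: "xl (\<Prod>j<n. M j) = (\<Sum>k<n. (\<Prod>j\<in>{..<n} - {k}. M j) * xl (M k))"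
    by (rule xl_prod) (auto intro: M0)
  have C: "(\<Sum>k<n. \<Prod>j<n. (if j = k then EE (a k False) (a k True) else M j))
       = (\<Sum>k<n. EE (a k False) (a k True) * (\<Prod>j\<in>{..<n} - {k}. M j))"
    by (intro sum.cong refl) (simp add: prod_pick)
  show ?thesis unfolding M_def[symmetric] A B C
    by (simp add: EE_def M_def sum_subtractf[symmetric] algebra_simps)
qed


lemma is_channel_chanp: "is_channel V \<longleftrightarrow> chanp (V False) (V True)"
  unfolding is_channel_def chanp_def by (metis (full_types))

lemma sym_cap_KKs:
  assumes "\<And>x y. V x y \<ge> 0"
  shows "sym_cap V = KKs (V False) (V True)"
  unfolding sym_cap_def KKs_def
proof (intro infsum_cong)
  fix y
  show "(\<Sum>x\<in>{False, True}. if V x y = 0 then 0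
          else 1 / 2 * V x y * log 2 (V x y / (1 / 2 * V False y + 1 / 2 * V True y))) = KK (V False y) (V True y)"
  proof -
    have e: "\<And>f :: bool \<Rightarrow> real. (\<Sum>x\<in>{False, True}. f x) = f False + f True" by simp
    show ?thesis using symcap_term[of "V False y" "V True y", OF assms assms] unfolding e KK_def
      by (simp only: if_True if_False)
  qed
qed

lemma KKs_EE:
  assumes "chanp A B"
  shows "((\<lambda>y. EE (A y) (B y)) has_sum (2 * KKs A B - 2)) UNIV"
proof -
  have A1: "(A has_sum 1) UNIV" and B1: "(B has_sum 1) UNIV" and A0: "\<And>y. A y \<ge> 0" and B0: "\<And>y. B y \<ge> 0"
    using assms by (auto simp: chanp_def)
  have hK: "((\<lambda>y. KK (A y) (B y)) has_sum KKs A B) UNIV"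
    unfolding KKs_def using KK_summable[OF assms] by auto
  have "((\<lambda>y. 2 * KK (A y) (B y) - (A y + B y)) has_sum (2 * KKs A B - (1 + 1))) UNIV"
    by (intro has_sum_diff' has_sum_cmult_right hK has_sum_add A1 B1)
  moreover have "2 * KK (A y) (B y) - (A y + B y) = EE (A y) (B y)" for y by (simp add: KK_def field_simps)
  ultimately show ?thesis by simp
qed

lemma KKs_le1: "chanp A B \<Longrightarrow> KKs A B \<le> 1"
proof -
  assume ch: "chanp A B"
  have "2 * KKs A B - 2 \<le> 0"
    using has_sum_mono[OF KKs_EE[OF ch], of "\<lambda>_. 0" 0] EE_le0 ch unfolding chanp_def by auto
  thus ?thesis by simp
qed

lemma Pm_bound:
  assumes ch: "chanp A B" and d: "d > 0" and K: "KKs A B \<le> 1 - d"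
  shows "(\<Sum>\<^sub>\<infinity>y. min (A y) (B y)) \<ge> d^2 * (2 * (ln 2)^2 / 9)"
proof -
  have A1: "(A has_sum 1) UNIV" and B1: "(B has_sum 1) UNIV" and A0: "\<And>y. A y \<ge> 0" and B0: "\<And>y. B y \<ge> 0"
    using ch by (auto simp: chanp_def)
  define c :: real where "c = 3 / (2 * ln 2)"
  have c: "c > 0" by (simp add: c_def)
  define e :: real where "e = d / (2 * c)"
  have e: "e > 0" using c d by (simp add: e_def)
  have sm: "(\<lambda>y. min (A y) (B y)) summable_on UNIV"
    by (rule summable_bound[where g=A]) (use A1 A0 B0 in \<open>auto simp: summable_on_def\<close>)
  define Pm where "Pm = (\<Sum>\<^sub>\<infinity>y. min (A y) (B y))"
  have hr: "((\<lambda>y. c * (e * (A y + B y) + min (A y) (B y) / e)) has_sum (c * (e * (1 + 1) + Pm / e))) UNIV"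
    by (intro has_sum_cmult_right has_sum_add has_sum_divide_const has_sum_add A1 B1)
       (use sm Pm_def in auto)
  have hl: "((\<lambda>y. - EE (A y) (B y)) has_sum (- (2 * KKs A B - 2))) UNIV"
    using has_sum_uminusI[OF KKs_EE[OF ch]] .
  have "- (2 * KKs A B - 2) \<le> c * (e * (1 + 1) + Pm / e)"
    by (rule has_sum_mono[OF hl hr]) (use negEE_lin A0 B0 e c_def in auto)
  hence "2 * d \<le> c * (2 * e) + c * Pm / e" using K by (simp add: algebra_simps)
  moreover have "c * (2 * e) = d" using c by (simp add: e_def)
  ultimately have "d \<le> c * Pm / e" by simp
  hence "d * e / c \<le> Pm" using c e by (simp add: field_simps)
  moreover have "d * e / c = d^2 * (2 * (ln 2)^2 / 9)"
    by (simp add: e_def c_def power2_eq_square field_simps)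
  ultimately show ?thesis by (simp add: Pm_def)
qed

lemma has_sum_prod_finite:
  fixes F :: "'a \<Rightarrow> 'b \<Rightarrow> real"
  assumes "finite B" "\<And>b. b \<in> B \<Longrightarrow> ((\<lambda>a. F a b) has_sum s b) A"
  shows "((\<lambda>(a,b). F a b) has_sum (\<Sum>b\<in>B. s b)) (A \<times> B)"
  using assms
proof (induction B rule: finite_induct)
  case empty thus ?case by simp
next
  case (insert x B)
  have e: "A \<times> insert x B = (A \<times> {x}) \<union> (A \<times> B)" by auto
  have d: "(A \<times> {x}) \<inter> (A \<times> B) = {}" using insert by auto
  have h1: "((\<lambda>(a,b). F a b) has_sum s x) (A \<times> {x})"
  proof -
    have "((\<lambda>a. F a x) has_sum s x) A" using insert by auto
    moreover have "A \<times> {x} = (\<lambda>a. (a, x)) ` A" by auto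
    moreover have "inj_on (\<lambda>a. (a, x)) A" by (auto simp: inj_on_def)
    ultimately show ?thesis by (simp add: has_sum_reindex o_def)
  qed
  have "((\<lambda>(a,b). F a b) has_sum (s x + (\<Sum>b\<in>B. s b))) (A \<times> {x} \<union> A \<times> B)"
    by (rule has_sum_Un_disjoint[OF h1 _ d]) (use insert in auto)
  thus ?case using insert e by simp
qed

lemma has_sum_Node:
  fixes F :: "'y out \<Rightarrow> real"
  assumes "\<And>z. z \<notin> (\<lambda>(ys,us). Node ys us) ` (Y \<times> U) \<Longrightarrow> F z = 0"
  shows "(F has_sum s) UNIV \<longleftrightarrow> ((\<lambda>(ys,us). F (Node ys us)) has_sum s) (Y \<times> U)"
proof -
  have i: "inj_on (\<lambda>(ys,us). Node ys us) (Y \<times> U)" by (auto simp: inj_on_def)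
  have "(F has_sum s) UNIV \<longleftrightarrow> (F has_sum s) ((\<lambda>(ys,us). Node ys us) ` (Y \<times> U))"
    by (rule has_sum_cong_neutral) (use assms in auto)
  also have "\<dots> \<longleftrightarrow> ((F \<circ> (\<lambda>(ys,us). Node ys us)) has_sum s) (Y \<times> U)"
    by (rule has_sum_reindex[OF i])
  finally show ?thesis by (simp add: o_def case_prod_unfold)
qed


definition wv :: "(bool \<Rightarrow> 'o \<Rightarrow> real) \<Rightarrow> (bool list \<Rightarrow> bool list) \<Rightarrow> nat \<Rightarrow> 'o list \<Rightarrow> bool list \<Rightarrow> real" where
  "wv C g l ys u = (\<Prod>j<l. C (g u ! j) (ys ! j))"

lemma synth_Node:
  "synth l g i C ui (Node ys us) = (if length ys = l \<and> length us = i
      then (1 / 2 ^ (l - 1)) * SS (wv C g l ys) l (us @ [ui]) else 0)"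
proof (cases "length ys = l \<and> length us = i")
  case True
  hence e: "l - length (us @ [ui]) = l - i - 1" by simp
  show ?thesis using True unfolding synth_def SS_def wv_def e by simp
qed (auto simp: synth_def)

lemma synth_zero:
  "z \<notin> (\<lambda>(ys,us). Node ys us) ` ({ys. length ys = l} \<times> LL i) \<Longrightarrow> synth l g i C ui z = 0"
  by (cases z) (auto simp: synth_def)

lemma wv_nonneg: "is_channel C \<Longrightarrow> wv C g l ys u \<ge> 0"
  unfolding wv_def is_channel_def by (auto intro: prod_nonneg)

lemma SS_nonneg: "is_channel C \<Longrightarrow> SS (wv C g l ys) l pre \<ge> 0"
  unfolding SS_def by (auto intro!: sum_nonneg wv_nonneg)

lemma wv_has_sum:
  assumes "is_channel C"
  shows "((\<lambda>ys. wv C g l ys u) has_sum 1) {ys. length ys = l}"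
  using list_prod_has_sum_nonneg[of l "\<lambda>j. C (g u ! j)" "\<lambda>_. 1"] assms
  unfolding wv_def is_channel_def by auto

lemma SS_has_sum:
  assumes "is_channel C"
  shows "((\<lambda>ys. SS (wv C g l ys) l pre) has_sum 2 ^ (l - length pre)) {ys. length ys = l}"
proof -
  have "((\<lambda>ys. \<Sum>v\<in>LL (l - length pre). wv C g l ys (pre @ v)) has_sum (\<Sum>v\<in>LL (l - length pre). 1)) {ys. length ys = l}"
    by (intro has_sum_sum_finite wv_has_sum assms) auto
  thus ?thesis by (simp add: SS_def card_LL)
qed

lemma synth_nonneg:
  assumes ch: "is_channel C" shows "synth l g i C x z \<ge> 0"
proof (cases z)
  case (Base y) thus ?thesis by (simp add: synth_def)
next
  case (Node ys us) thus ?thesis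
    using SS_nonneg[OF ch] by (auto simp: synth_Node)
qed

lemma is_channel_synth:
  assumes ch: "is_channel C" and i: "i < l"
  shows "is_channel (synth l g i C)"
  unfolding is_channel_def
proof (intro conjI allI)
  fix x z show "0 \<le> synth l g i C x z" by (rule synth_nonneg[OF ch])
next
  fix x
  define c :: real where "c = 1 / 2 ^ (l - 1)"
  have "((\<lambda>(ys,us). c * SS (wv C g l ys) l (us @ [x])) has_sum (\<Sum>us\<in>LL i. c * 2 ^ (l - Suc i)))
     ({ys. length ys = l} \<times> LL i)"
  proof (rule has_sum_prod_finite)
    fix us assume "us \<in> LL i"
    thus "((\<lambda>ys. c * SS (wv C g l ys) l (us @ [x])) has_sum c * 2 ^ (l - Suc i)) {ys. length ys = l}"
      using SS_has_sum[OF ch, of g l "us @ [x]"] by (intro has_sum_cmult_right) simp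
  qed simp
  moreover have "(\<Sum>us\<in>LL i. c * 2 ^ (l - Suc i)) = 1"
  proof -
    have A: "(\<Sum>us\<in>LL i. c * 2 ^ (l - Suc i)) = real (card (LL i)) * (c * 2 ^ (l - Suc i))"
      by (rule sum_constant)
    have B: "real (card (LL i)) = 2 ^ i" by (simp add: card_LL)
    have C: "(2::real) ^ i * 2 ^ (l - Suc i) = 2 ^ (l - 1)"
      using i by (simp add: power_add[symmetric])
    have "(\<Sum>us\<in>LL i. c * 2 ^ (l - Suc i)) = c * ((2::real) ^ i * 2 ^ (l - Suc i))"
      unfolding A B by simp
    also have "\<dots> = 1" unfolding C c_def by simp
    finally show ?thesis .
  qed
  ultimately have H: "((\<lambda>(ys,us). c * SS (wv C g l ys) l (us @ [x])) has_sum 1) ({ys. length ys = l} \<times> LL i)"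
    by metis
  have "((\<lambda>(ys,us). synth l g i C x (Node ys us)) has_sum 1) ({ys. length ys = l} \<times> LL i)"
    using H by (rule has_sum_cong[THEN iffD2, rotated]) (auto simp: synth_Node c_def)
  thus "(synth l g i C x has_sum 1) UNIV"
    by (subst has_sum_Node) (auto intro: synth_zero)
qed


definition QQ :: "(bool \<Rightarrow> 'o \<Rightarrow> real) \<Rightarrow> (bool list \<Rightarrow> bool list) \<Rightarrow> nat \<Rightarrow> bool list \<Rightarrow> real" where
  "QQ C g l us = (\<Sum>\<^sub>\<infinity>ys\<in>{ys. length ys = l}.
      EE (SS (wv C g l ys) l (us @ [False])) (SS (wv C g l ys) l (us @ [True])))"

lemma EE_SS_summable:
  assumes ch: "is_channel C"
  shows "(\<lambda>ys. EE (SS (wv C g l ys) l (us @ [False])) (SS (wv C g l ys) l (us @ [True])))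
           summable_on {ys. length ys = l}"
proof (rule summable_bound)
  show "(\<lambda>ys. SS (wv C g l ys) l (us @ [False]) + SS (wv C g l ys) l (us @ [True])) summable_on {ys. length ys = l}"
    using has_sum_add[OF SS_has_sum[OF ch] SS_has_sum[OF ch]] by (rule has_sum_imp_summable)
qed (intro abs_EE SS_nonneg ch)

lemma JJ_synth:
  fixes C :: "bool \<Rightarrow> 'y out \<Rightarrow> real"
  assumes ch: "is_channel C" and i: "i < l"
  shows "((\<lambda>z. EE (synth l g i C False z) (synth l g i C True z)) has_sum
           ((1 / 2 ^ (l - 1)) * (\<Sum>us\<in>LL i. QQ C g l us))) UNIV"
proof -
  define c :: real where "c = 1 / 2 ^ (l - 1)"
  have c0: "c \<ge> 0" by (simp add: c_def)
  have "((\<lambda>(ys,us). c * EE (SS (wv C g l ys) l (us @ [False])) (SS (wv C g l ys) l (us @ [True])))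
       has_sum (\<Sum>us\<in>LL i. c * QQ C g l us)) ({ys. length ys = l} \<times> LL i)"
  proof (rule has_sum_prod_finite)
    fix us assume "us \<in> LL i"
    show "((\<lambda>ys. c * EE (SS (wv C g l ys) l (us @ [False])) (SS (wv C g l ys) l (us @ [True])))
       has_sum c * QQ C g l us) {ys. length ys = l}"
      unfolding QQ_def by (intro has_sum_cmult_right has_sum_infsum EE_SS_summable ch)
  qed simp
  hence H: "((\<lambda>(ys,us). c * EE (SS (wv C g l ys) l (us @ [False])) (SS (wv C g l ys) l (us @ [True])))
       has_sum (c * (\<Sum>us\<in>LL i. QQ C g l us))) ({ys. length ys = l} \<times> LL i)"
    by (simp add: sum_distrib_left)
  have "((\<lambda>(ys,us). EE (synth l g i C False (Node ys us)) (synth l g i C True (Node ys us)))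
       has_sum (c * (\<Sum>us\<in>LL i. QQ C g l us))) ({ys. length ys = l} \<times> LL i)"
  proof (rule has_sum_cong[THEN iffD2, OF _ H])
    fix x :: "'y out list \<times> bool list" assume x: "x \<in> {ys. length ys = l} \<times> LL i"
    obtain ys :: "'y out list" and us where xe: "x = (ys, us)" by fastforce
    have sy: "synth l g i C b (Node ys us) = c * SS (wv C g l ys) l (us @ [b])" for b
      using x xe by (simp add: synth_Node c_def)
    show "(\<lambda>(ys,us). EE (synth l g i C False (Node ys us)) (synth l g i C True (Node ys us))) x
        = (\<lambda>(ys,us). c * EE (SS (wv C g l ys) l (us @ [False])) (SS (wv C g l ys) l (us @ [True]))) x"
      unfolding xe using sy EE_hom[OF c0 SS_nonneg[OF ch] SS_nonneg[OF ch]] by simp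
  qed
  thus ?thesis unfolding c_def
    by (subst has_sum_Node) (auto simp: synth_zero)
qed

lemma symcap_synth:
  fixes C :: "bool \<Rightarrow> 'y out \<Rightarrow> real"
  assumes ch: "is_channel C" and i: "i < l"
  shows "sym_cap (synth l g i C) = 1 + (1 / 2 ^ (l - 1)) * (\<Sum>us\<in>LL i. QQ C g l us) / 2"
proof -
  have chs: "chanp (synth l g i C False) (synth l g i C True)"
    using is_channel_synth[OF ch i] is_channel_chanp by blast
  have "sym_cap (synth l g i C) = KKs (synth l g i C False) (synth l g i C True)"
    by (rule sym_cap_KKs) (rule synth_nonneg[OF ch])
  moreover have "2 * KKs (synth l g i C False) (synth l g i C True) - 2 = (1 / 2 ^ (l - 1)) * (\<Sum>us\<in>LL i. QQ C g l us)"
    using has_sum_unique[OF KKs_EE[OF chs] JJ_synth[OF ch i]] .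
  ultimately show ?thesis by simp
qed


lemma perys:
  assumes ch: "is_channel C" and ker: "is_kernel l g" and ys: "length ys = l"
  shows "(\<Sum>i<l. \<Sum>us\<in>LL i. EE (SS (wv C g l ys) l (us @ [False])) (SS (wv C g l ys) l (us @ [True])))
    = (\<Sum>k<l. \<Prod>j<l. (if j = k then EE (C False (ys ! k)) (C True (ys ! k)) else C False (ys ! j) + C True (ys ! j)))"
proof -
  define H where "H x = (\<Prod>j<l. C (x ! j) (ys ! j))" for x
  have bij: "bij_betw g (LL l) (LL l)" using ker by (simp add: is_kernel_def)
  have w: "wv C g l ys u = H (g u)" for u by (simp add: wv_def H_def)
  have s1: "(\<Sum>u\<in>LL l. xl (wv C g l ys u)) = (\<Sum>x\<in>LL l. xl (\<Prod>j<l. C (x ! j) (ys ! j)))"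
    unfolding w using sum.reindex_bij_betw[OF bij, of "\<lambda>x. xl (H x)"] by (simp add: H_def)
  have s2: "SS (wv C g l ys) l [] = (\<Prod>j<l. C False (ys ! j) + C True (ys ! j))"
  proof -
    have "SS (wv C g l ys) l [] = (\<Sum>u\<in>LL l. H (g u))" by (simp add: SS_def w)
    also have "\<dots> = (\<Sum>x\<in>LL l. H x)" by (rule sum.reindex_bij_betw[OF bij])
    also have "\<dots> = (\<Prod>j<l. C False (ys ! j) + C True (ys ! j))"
      unfolding H_def by (rule sumL_prod[of "\<lambda>j b. C b (ys ! j)" l])
    finally show ?thesis .
  qed
  have "(\<Sum>i<l. \<Sum>us\<in>LL i. EE (SS (wv C g l ys) l (us @ [False])) (SS (wv C g l ys) l (us @ [True])))
      = (\<Sum>u\<in>LL l. xl (wv C g l ys u)) - xl (SS (wv C g l ys) l [])"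
    by (rule telescope)
  also have "\<dots> = (\<Sum>x\<in>LL l. xl (\<Prod>j<l. C (x ! j) (ys ! j))) - xl (\<Prod>j<l. C False (ys ! j) + C True (ys ! j))"
    unfolding s1 s2 ..
  also have "\<dots> = (\<Sum>k<l. \<Prod>j<l. (if j = k then EE (C False (ys ! k)) (C True (ys ! k)) else C False (ys ! j) + C True (ys ! j)))"
    using perys_identity[of "\<lambda>j b. C b (ys ! j)" l] ch unfolding is_channel_def by simp
  finally show ?thesis .
qed

lemma chain_QQ:
  fixes C :: "bool \<Rightarrow> 'o \<Rightarrow> real"
  assumes ch: "is_channel C" and ker: "is_kernel l g" and l: "l \<ge> 1"
  shows "(\<Sum>i<l. \<Sum>us\<in>LL i. QQ C g l us) = real l * 2 ^ (l - 1) * (2 * KKs (C False) (C True) - 2)"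
proof -
  define E where "E us (ys :: 'o list) = EE (SS (wv C g l ys) l (us @ [False])) (SS (wv C g l ys) l (us @ [True]))" for us ys
  define YL where "YL = {ys :: 'o list. length ys = l}"
  have Es: "(E us) summable_on YL" for us unfolding E_def YL_def by (rule EE_SS_summable[OF ch])
  have "(\<Sum>i<l. \<Sum>us\<in>LL i. QQ C g l us) = (\<Sum>i<l. \<Sum>\<^sub>\<infinity>ys\<in>YL. \<Sum>us\<in>LL i. E us ys)"
    unfolding QQ_def E_def[symmetric] YL_def[symmetric]
    by (intro sum.cong refl infsum_sum_finite[symmetric] Es) auto
  also have "\<dots> = (\<Sum>\<^sub>\<infinity>ys\<in>YL. \<Sum>i<l. \<Sum>us\<in>LL i. E us ys)"
    by (intro infsum_sum_finite[symmetric] summable_sum_finite Es) auto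
  also have "\<dots> = (\<Sum>\<^sub>\<infinity>ys\<in>YL. \<Sum>k<l. \<Prod>j<l. (if j = k then EE (C False (ys ! j)) (C True (ys ! j)) else C False (ys ! j) + C True (ys ! j)))"
  proof (intro infsum_cong)
    fix ys assume "ys \<in> YL"
    hence "length ys = l" by (simp add: YL_def)
    from perys[OF ch ker this] show "(\<Sum>i<l. \<Sum>us\<in>LL i. E us ys) = (\<Sum>k<l. \<Prod>j<l. (if j = k then EE (C False (ys ! j)) (C True (ys ! j)) else C False (ys ! j) + C True (ys ! j)))"
      unfolding E_def by (simp cong: if_cong)
  qed
  also have "\<dots> = (\<Sum>k<l. (2 * KKs (C False) (C True) - 2) * 2 ^ (l - 1))"
  proof -
    define f where "f k j y = (if j = k then EE (C False y) (C True y) else C False y + C True y)" for k j :: nat and y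
    have chp: "chanp (C False) (C True)" using ch is_channel_chanp by blast
    have C0: "C b y \<ge> 0" for b y using ch unfolding is_channel_def by auto
    have "((\<lambda>y. C False y + C True y) has_sum (1 + 1)) UNIV"
      by (intro has_sum_add) (use ch in \<open>auto simp: is_channel_def\<close>)
    hence CS: "((\<lambda>y. C False y + C True y) has_sum 2) UNIV" by simp
    have EEs: "((\<lambda>y. EE (C False y) (C True y)) has_sum (2 * KKs (C False) (C True) - 2)) UNIV"
      by (rule KKs_EE[OF chp])
    have fabs: "(\<lambda>y. \<bar>f k j y\<bar>) summable_on UNIV" for k j
    proof -
      have "(\<lambda>y. f k j y) summable_on UNIV"
        by (rule summable_bound[where g="\<lambda>y. C False y + C True y"])
           (use CS C0 in \<open>auto simp: f_def summable_on_def intro!: abs_EE C0 add_nonneg_nonneg\<close>)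
      thus ?thesis using summable_on_iff_abs_summable_on_real by (metis real_norm_def summable_on_cong)
    qed
    have inf_f: "infsum (f k j) UNIV = (if j = k then 2 * KKs (C False) (C True) - 2 else 2)" for k j
      using EEs CS unfolding f_def by (auto intro: infsumI)
    have each: "((\<lambda>ys. \<Prod>j<l. f k j (ys ! j)) has_sum ((2 * KKs (C False) (C True) - 2) * 2 ^ (l - 1))) YL"
      if k: "k < l" for k
    proof -
      have "((\<lambda>ys. \<Prod>j<l. f k j (ys ! j)) has_sum (\<Prod>j<l. infsum (f k j) UNIV)) YL"
        unfolding YL_def by (rule list_prod_has_sum_abs) (rule fabs)
      moreover have "(\<Prod>j<l. infsum (f k j) UNIV) = (2 * KKs (C False) (C True) - 2) * 2 ^ (l - 1)"
      proof -
        have "(\<Prod>j<l. infsum (f k j) UNIV) = (\<Prod>j<l. (if j = k then 2 * KKs (C False) (C True) - 2 else 2))"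
          by (simp add: inf_f)
        also have "\<dots> = (2 * KKs (C False) (C True) - 2) * (\<Prod>j\<in>{..<l} - {k}. 2)"
          by (rule prod_pick[OF k])
        also have "(\<Prod>j\<in>{..<l} - {k}. (2::real)) = 2 ^ (l - 1)" using k by simp
        finally show ?thesis .
      qed
      ultimately show ?thesis by simp
    qed
    have "(\<Sum>\<^sub>\<infinity>ys\<in>YL. \<Sum>k<l. \<Prod>j<l. (if j = k then EE (C False (ys ! j)) (C True (ys ! j)) else C False (ys ! j) + C True (ys ! j)))
        = (\<Sum>\<^sub>\<infinity>ys\<in>YL. \<Sum>k<l. \<Prod>j<l. f k j (ys ! j))" by (simp add: f_def)
    also have "\<dots> = (\<Sum>k<l. (2 * KKs (C False) (C True) - 2) * 2 ^ (l - 1))"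
      by (intro infsumI has_sum_sum_finite each) auto
    finally show ?thesis .
  qed
  also have "\<dots> = real l * 2 ^ (l - 1) * (2 * KKs (C False) (C True) - 2)" by simp
  finally show ?thesis .
qed


lemma symcap_C:
  assumes ch: "is_channel C" shows "sym_cap C = KKs (C False) (C True)"
  by (rule sym_cap_KKs) (use ch in \<open>auto simp: is_channel_def\<close>)

lemma chain_rule:
  fixes C :: "bool \<Rightarrow> 'y out \<Rightarrow> real"
  assumes ch: "is_channel C" and ker: "is_kernel l g" and l: "l \<ge> 1"
  shows "(\<Sum>i<l. sym_cap (synth l g i C)) = real l * sym_cap C"
proof -
  define K where "K = KKs (C False) (C True)"
  have "(\<Sum>i<l. sym_cap (synth l g i C)) = (\<Sum>i<l. 1 + (1 / 2 ^ (l - 1)) * (\<Sum>us\<in>LL i. QQ C g l us) / 2)"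
    by (intro sum.cong refl symcap_synth ch) auto
  also have "\<dots> = real l + (1 / 2 ^ (l - 1)) / 2 * (\<Sum>i<l. \<Sum>us\<in>LL i. QQ C g l us)"
    by (simp add: sum.distrib sum_distrib_left sum_divide_distrib)
  also have "\<dots> = real l + (1 / 2 ^ (l - 1)) / 2 * (real l * 2 ^ (l - 1) * (2 * K - 2))"
    unfolding chain_QQ[OF ch ker l] K_def ..
  also have "\<dots> = real l * K" by (simp add: field_simps)
  finally show ?thesis using symcap_C[OF ch] K_def by simp
qed

lemma symcap_bounds:
  assumes ch: "is_channel C" shows "0 \<le> sym_cap C" "sym_cap C \<le> 1"
  using symcap_C[OF ch] KKs_nonneg KKs_le1 is_channel_chanp ch by metis+

lemma QQ_Tf:
  assumes "length us = l - 1" "l \<ge> 1"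
  shows "QQ C g l us = Tf C (\<lambda>j. g (us @ [False]) ! j) (\<lambda>j. g (us @ [True]) ! j) {..<l}"
proof -
  have len: "length (us @ [b]) = l" for b using assms by simp
  have "QQ C g l us = (\<Sum>\<^sub>\<infinity>ys\<in>{ys. length ys = l}. EE (wv C g l ys (us @ [False])) (wv C g l ys (us @ [True])))"
    unfolding QQ_def using SS_full[OF len[of False]] SS_full[OF len[of True]] by simp
  also have "\<dots> = (\<Sum>\<^sub>\<infinity>ys\<in>{ys. length ys = l}.
      (\<lambda>h. EE (\<Prod>j\<in>{..<l}. C (g (us @ [False]) ! j) (h j)) (\<Prod>j\<in>{..<l}. C (g (us @ [True]) ! j) (h j)))
        (restrict (\<lambda>j. ys ! j) {..<l}))"
    unfolding wv_def by (intro infsum_cong arg_cong2[where f=EE] prod.cong) auto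
  also have "\<dots> = Tf C (\<lambda>j. g (us @ [False]) ! j) (\<lambda>j. g (us @ [True]) ! j) {..<l}"
    unfolding Tf_def by (rule infsum_reindex_bij_betw[OF lists_PiE_bij])
  finally show ?thesis .
qed

lemma two_elems:
  assumes "card S \<ge> 2"
  obtains i k where "i \<in> S" "k \<in> S" "i \<noteq> k"
proof -
  have f: "finite S" "S \<noteq> {}" using assms card_gt_0_iff by force+
  then obtain i where i: "i \<in> S" by blast
  have "card (S - {i}) \<ge> 1" using assms f i by (simp add: card_Diff_singleton)
  then obtain k where "k \<in> S - {i}" by (metis One_nat_def card.empty ex_in_conv not_one_le_zero)
  thus ?thesis using that i by blast
qed

lemma gain:
  fixes C :: "bool \<Rightarrow> 'y out \<Rightarrow> real"
  assumes ch: "is_channel C" and ker: "is_kernel l g" and l: "l \<ge> 2"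
    and ham: "\<exists>u. length u = l - 1 \<and> hamming (g (u @ [False])) (g (u @ [True])) \<ge> 2"
    and d: "d > 0" "d \<le> sym_cap C" "sym_cap C \<le> 1 - d"
  shows "sym_cap (synth l g (l - 1) C) \<ge> sym_cap C + (1 / 2 ^ (l - 1)) * (d * (d^2 * (2 * (ln 2)^2 / 9)))"
proof -
  define K where "K = KKs (C False) (C True)"
  have chp: "chanp (C False) (C True)" using ch is_channel_chanp by blast
  have KC: "sym_cap C = K" using symcap_C[OF ch] K_def by simp
  define Pm where "Pm = (\<Sum>\<^sub>\<infinity>y. min (C False y) (C True y))"
  have Pm: "Pm \<ge> d^2 * (2 * (ln 2)^2 / 9)" unfolding Pm_def
    by (rule Pm_bound[OF chp d(1)]) (use d KC K_def in auto)
  have K0: "K \<ge> 0" using KKs_nonneg[OF chp] K_def by simp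
  have bij: "bij_betw g (LL l) (LL l)" using ker by (simp add: is_kernel_def)
  have glen: "length (g u) = l" if "length u = l" for u using bij that bij_betwE by blast
  have lb1: "QQ C g l us \<ge> -2 + 2 * K" if us: "us \<in> LL (l - 1)" for us
  proof -
    have len: "length (us @ [b]) = l" for b using us l by simp
    have "g (us @ [False]) \<noteq> g (us @ [True])"
      using inj_on_eq_iff[OF bij_betw_imp_inj_on[OF bij], of "us @ [False]" "us @ [True]"] len by simp
    then obtain k where k: "k < l" "g (us @ [False]) ! k \<noteq> g (us @ [True]) ! k"
      using glen[OF len[of False]] glen[OF len[of True]] nth_equalityI by metis
    have "-2 + 2 * K \<le> Tf C (\<lambda>j. g (us @ [False]) ! j) (\<lambda>j. g (us @ [True]) ! j) {k}"
      unfolding K_def using Tf_single[of C "\<lambda>j. g (us @ [False]) ! j" k "\<lambda>j. g (us @ [True]) ! j"] chp k by simp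
    also have "\<dots> \<le> Tf C (\<lambda>j. g (us @ [False]) ! j) (\<lambda>j. g (us @ [True]) ! j) {..<l}"
      by (rule Tf_mono[OF chp]) (use k in auto)
    finally show ?thesis using QQ_Tf[of us l C g] us l by simp
  qed
  obtain u where u: "length u = l - 1" "hamming (g (u @ [False])) (g (u @ [True])) \<ge> 2" using ham by blast
  have lb2: "QQ C g l u \<ge> -2 + 2 * K + 2 * K * Pm"
  proof -
    obtain i k where ik: "i \<in> {j. j < length (g (u @ [False])) \<and> j < length (g (u @ [True])) \<and> g (u @ [False]) ! j \<noteq> g (u @ [True]) ! j}"
       "k \<in> {j. j < length (g (u @ [False])) \<and> j < length (g (u @ [True])) \<and> g (u @ [False]) ! j \<noteq> g (u @ [True]) ! j}" "i \<noteq> k"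
      using u(2) unfolding hamming_def by (rule two_elems)
    have len: "length (u @ [b]) = l" for b using u l by simp
    have ik2: "i < l" "k < l" "g (u @ [False]) ! i \<noteq> g (u @ [True]) ! i" "g (u @ [False]) ! k \<noteq> g (u @ [True]) ! k"
      using ik glen[OF len[of False]] by auto
    have "-2 + 2 * K + 2 * K * Pm \<le> Tf C (\<lambda>j. g (u @ [False]) ! j) (\<lambda>j. g (u @ [True]) ! j) {i, k}"
      unfolding K_def Pm_def by (rule Tf_pair[OF chp]) (use ik2 ik(3) in auto)
    also have "\<dots> \<le> Tf C (\<lambda>j. g (u @ [False]) ! j) (\<lambda>j. g (u @ [True]) ! j) {..<l}"
      by (rule Tf_mono[OF chp]) (use ik2 in auto)
    finally show ?thesis using QQ_Tf[of u l C g] u l by simp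
  qed
  have uL: "u \<in> LL (l - 1)" using u by simp
  have "(\<Sum>us\<in>LL (l - 1). QQ C g l us) = QQ C g l u + (\<Sum>us\<in>LL (l - 1) - {u}. QQ C g l us)"
    by (rule sum.remove[OF finite_LL uL])
  also have "\<dots> \<ge> (-2 + 2 * K + 2 * K * Pm) + (\<Sum>us\<in>LL (l - 1) - {u}. -2 + 2 * K)"
    using lb2 lb1 by (intro add_mono sum_mono) auto
  finally have S: "(\<Sum>us\<in>LL (l - 1). QQ C g l us) \<ge> (-2 + 2 * K) * 2 ^ (l - 1) + 2 * K * Pm"
  proof -
    assume a: "(\<Sum>us\<in>LL (l - 1). QQ C g l us) \<ge> (-2 + 2 * K + 2 * K * Pm) + (\<Sum>us\<in>LL (l - 1) - {u}. -2 + 2 * K)"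
    have "(-2 + 2 * K) + (\<Sum>us\<in>LL (l - 1) - {u}. -2 + 2 * K) = (\<Sum>us\<in>LL (l - 1). -2 + 2 * K)"
      using sum.remove[OF finite_LL uL, of "\<lambda>_. -2 + 2 * K"] by simp
    also have "\<dots> = (-2 + 2 * K) * 2 ^ (l - 1)" by (simp add: card_LL)
    finally show ?thesis using a by simp
  qed
  have "sym_cap (synth l g (l - 1) C) = 1 + (1 / 2 ^ (l - 1)) * (\<Sum>us\<in>LL (l - 1). QQ C g l us) / 2"
    using symcap_synth[OF ch, of "l - 1" l g] l by simp
  also have "\<dots> \<ge> 1 + (1 / 2 ^ (l - 1)) * ((-2 + 2 * K) * 2 ^ (l - 1) + 2 * K * Pm) / 2"
    using S by (simp add: divide_right_mono)
  finally have A: "sym_cap (synth l g (l - 1) C) \<ge> K + (1 / 2 ^ (l - 1)) * (K * Pm)"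
    by (simp add: field_simps)
  have "K * Pm \<ge> d * (d^2 * (2 * (ln 2)^2 / 9))"
    by (rule mult_mono) (use d KC Pm K0 in auto)
  hence "(1 / 2 ^ (l - 1)) * (K * Pm) \<ge> (1 / 2 ^ (l - 1)) * (d * (d^2 * (2 * (ln 2)^2 / 9)))"
    by (intro mult_left_mono) auto
  thus ?thesis using A KC by simp
qed


lemma lift_channel:
  assumes ch: "is_channel W"
  shows "is_channel (lift_chan W)" "sym_cap (lift_chan W) = sym_cap W"
proof -
  have inj: "inj Base" by (auto simp: inj_on_def)
  have W0: "W x y \<ge> 0" for x y using ch by (auto simp: is_channel_def)
  show "is_channel (lift_chan W)"
    unfolding is_channel_def
  proof (intro conjI allI)
    fix x z show "0 \<le> lift_chan W x z" by (cases z) (auto simp: lift_chan_def W0)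
  next
    fix x
    have "(W x has_sum 1) UNIV" using ch by (auto simp: is_channel_def)
    hence "((lift_chan W x \<circ> Base) has_sum 1) UNIV" by (simp add: o_def lift_chan_def)
    hence "(lift_chan W x has_sum 1) (range Base)" by (simp add: has_sum_reindex[OF inj])
    moreover have "(lift_chan W x has_sum 1) (range Base) \<longleftrightarrow> (lift_chan W x has_sum 1) UNIV"
      by (rule has_sum_cong_neutral) (auto simp: lift_chan_def split: out.splits)
    ultimately show "(lift_chan W x has_sum 1) UNIV" by simp
  qed
  have L0: "lift_chan W x z \<ge> 0" for x z by (cases z) (auto simp: lift_chan_def W0)
  have "sym_cap (lift_chan W) = KKs (lift_chan W False) (lift_chan W True)"
    by (rule sym_cap_KKs) (rule L0)
  also have "\<dots> = (\<Sum>\<^sub>\<infinity>z\<in>range Base. KK (lift_chan W False z) (lift_chan W True z))"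
    unfolding KKs_def
    by (rule infsum_cong_neutral) (auto simp: lift_chan_def KK_def split: out.splits)
  also have "\<dots> = (\<Sum>\<^sub>\<infinity>y. KK (W False y) (W True y))"
    by (simp add: infsum_reindex[OF inj] o_def lift_chan_def)
  also have "\<dots> = sym_cap W" using sym_cap_KKs[of W] W0 by (simp add: KKs_def)
  finally show "sym_cap (lift_chan W) = sym_cap W" .
qed

definition chs :: "nat \<Rightarrow> (bool list \<Rightarrow> bool list) \<Rightarrow> (bool \<Rightarrow> 'y \<Rightarrow> real) \<Rightarrow> nat list \<Rightarrow> bool \<Rightarrow> 'y out \<Rightarrow> real" where
  "chs l g W bs = foldl (\<lambda>V b. synth l g b V) (lift_chan W) bs"

lemma chs_snoc: "chs l g W (bs @ [b]) = synth l g b (chs l g W bs)"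
  by (simp add: chs_def)

lemma chan_seq_chs: "chan_seq l g W B \<omega> n = chs l g W (map (\<lambda>k. B k \<omega>) [1..<Suc n])"
  by (induction n) (auto simp: chs_def)

lemma chs_channel:
  assumes "is_channel W" "set bs \<subseteq> {..<l}"
  shows "is_channel (chs l g W bs)"
  using assms(2)
proof (induction bs rule: rev_induct)
  case Nil thus ?case using lift_channel[OF assms(1)] by (simp add: chs_def)
next
  case (snoc b bs) thus ?case by (auto simp: chs_snoc intro!: is_channel_synth)
qed


lemma polar_seq:
  fixes x :: "nat \<Rightarrow> real"
  assumes b: "\<And>n. 0 \<le> x n \<and> x n \<le> 1"
    and j: "\<And>k. \<forall>\<^sub>F n in sequentially. \<bar>x (Suc n) - x n\<bar> < 1 / (real k + 4)"
    and m: "\<And>k. \<forall>\<^sub>F n in sequentially. \<not> (1 / (real k + 4) \<le> x n \<and> x n \<le> 1 - 1 / (real k + 4))"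
  shows "\<exists>L. (L = 0 \<or> L = 1) \<and> x \<longlonglongrightarrow> L"
proof -
  have "\<forall>\<^sub>F n in sequentially. \<bar>x (Suc n) - x n\<bar> < 1 / 4 \<and> \<not> (1 / 4 \<le> x n \<and> x n \<le> 1 - 1 / 4)"
    using eventually_conj[OF j[of 0] m[of 0]] by simp
  then obtain N where N: "\<And>n. n \<ge> N \<Longrightarrow> \<bar>x (Suc n) - x n\<bar> < 1 / 4 \<and> (x n < 1/4 \<or> x n > 3/4)"
    unfolding eventually_sequentially by force
  have small: "\<exists>k::nat. 1 / (real k + 4) < e" if "e > 0" for e :: real
  proof -
    obtain k :: nat where "real k > 1 / e" using reals_Archimedean2 by blast
    hence "1 / (real k + 4) < e" using that by (simp add: field_simps)
    thus ?thesis by blast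
  qed
  show ?thesis
  proof (cases "x N < 1/4")
    case True
    have low: "x n < 1/4" if "n \<ge> N" for n
      using that
    proof (induction n rule: dec_induct)
      case base thus ?case using True .
    next
      case (step n) thus ?case using N[of n] N[of "Suc n"] by auto
    qed
    have "x \<longlonglongrightarrow> 0"
    proof (rule LIMSEQ_I)
      fix e :: real assume e: "e > 0"
      obtain k :: nat where k: "1 / (real k + 4) < e" using small[OF e] by blast
      obtain N2 where N2: "\<And>n. n \<ge> N2 \<Longrightarrow> \<not> (1 / (real k + 4) \<le> x n \<and> x n \<le> 1 - 1 / (real k + 4))"
        using m[of k] unfolding eventually_sequentially by force
      have "norm (x n - 0) < e" if "n \<ge> max N N2" for n
      proof -
        have "x n < 1/4" using low that by auto
        moreover have "1 / (real k + 4) \<le> 1/4" by (simp add: field_simps)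
        ultimately have "x n < 1 / (real k + 4)" using N2[of n] that by auto
        thus ?thesis using b[of n] k by simp
      qed
      thus "\<exists>no. \<forall>n\<ge>no. norm (x n - 0) < e" by blast
    qed
    thus ?thesis by blast
  next
    case False
    hence F: "x N > 3/4" using N[of N] by auto
    have high: "x n > 3/4" if "n \<ge> N" for n
      using that
    proof (induction n rule: dec_induct)
      case base thus ?case using F .
    next
      case (step n) thus ?case using N[of n] N[of "Suc n"] by auto
    qed
    have "x \<longlonglongrightarrow> 1"
    proof (rule LIMSEQ_I)
      fix e :: real assume e: "e > 0"
      obtain k :: nat where k: "1 / (real k + 4) < e" using small[OF e] by blast
      obtain N2 where N2: "\<And>n. n \<ge> N2 \<Longrightarrow> \<not> (1 / (real k + 4) \<le> x n \<and> x n \<le> 1 - 1 / (real k + 4))"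
        using m[of k] unfolding eventually_sequentially by force
      have "norm (x n - 1) < e" if "n \<ge> max N N2" for n
      proof -
        have "x n > 3/4" using high that by auto
        moreover have "1 / (real k + 4) \<le> 1/4" by (simp add: field_simps)
        ultimately have "x n > 1 - 1 / (real k + 4)" using N2[of n] that by auto
        thus ?thesis using b[of n] k by simp
      qed
      thus "\<exists>no. \<forall>n\<ge>no. norm (x n - 1) < e" by blast
    qed
    thus ?thesis by blast
  qed
qed

definition Lb :: "nat \<Rightarrow> nat \<Rightarrow> nat list set" where
  "Lb l n = {bs. set bs \<subseteq> {..<l} \<and> length bs = n}"

lemma finite_Lb[simp]: "finite (Lb l n)"
  unfolding Lb_def by (rule finite_lists_length_eq) simp

lemma card_Lb: "card (Lb l n) = l ^ n"
  unfolding Lb_def using card_lists_length_eq[of "{..<l}" n] by simp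

lemma sum_Lb_Suc: "(\<Sum>bs\<in>Lb l (Suc n). h bs) = (\<Sum>bs\<in>Lb l n. \<Sum>i<l. h (bs @ [i]))"
proof -
  have e: "Lb l (Suc n) = (\<lambda>(bs,i). bs @ [i]) ` (Lb l n \<times> {..<l})"
  proof
    show "Lb l (Suc n) \<subseteq> (\<lambda>(bs,i). bs @ [i]) ` (Lb l n \<times> {..<l})"
    proof
      fix x assume x: "x \<in> Lb l (Suc n)"
      hence "x = butlast x @ [last x]" by (intro append_butlast_last_id[symmetric]) (auto simp: Lb_def)
      moreover have "butlast x \<in> Lb l n" "last x \<in> {..<l}" using x
        by (auto simp: Lb_def dest: in_set_butlastD) (metis last_in_set list.size(3) nat.distinct(1) subsetD lessThan_iff)
      ultimately show "x \<in> (\<lambda>(bs,i). bs @ [i]) ` (Lb l n \<times> {..<l})" by force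
    qed
  qed (auto simp: Lb_def)
  have i: "inj_on (\<lambda>(bs,i). bs @ [i]) (Lb l n \<times> {..<l})" by (auto simp: inj_on_def)
  have "(\<Sum>bs\<in>Lb l (Suc n). h bs) = (\<Sum>(bs,i)\<in>Lb l n \<times> {..<l}. h (bs @ [i]))"
    unfolding e by (subst sum.reindex[OF i]) (simp add: case_prod_unfold)
  also have "\<dots> = (\<Sum>bs\<in>Lb l n. \<Sum>i<l. h (bs @ [i]))" by (rule sum.cartesian_product[symmetric])
  finally show ?thesis .
qed

lemma Lb0: "Lb l 0 = {[]}" by (auto simp: Lb_def)

lemma Lb_set: "bs \<in> Lb l n \<Longrightarrow> set bs \<subseteq> {..<l}" by (simp add: Lb_def)

locale polar_fun =
  fixes l :: nat and f :: "nat list \<Rightarrow> real"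
  assumes l: "l \<ge> 1"
    and fb: "\<And>bs. set bs \<subseteq> {..<l} \<Longrightarrow> 0 \<le> f bs \<and> f bs \<le> 1"
    and fm: "\<And>bs. set bs \<subseteq> {..<l} \<Longrightarrow> (\<Sum>i<l. f (bs @ [i])) = real l * f bs"
begin

lemma avg: "(\<Sum>bs\<in>Lb l n. f bs) = real l ^ n * f []"
proof (induction n)
  case 0
  have "Lb l 0 = {[]}" by (auto simp: Lb_def)
  thus ?case by simp
next
  case (Suc n)
  have "(\<Sum>bs\<in>Lb l (Suc n). f bs) = (\<Sum>bs\<in>Lb l n. real l * f bs)"
    unfolding sum_Lb_Suc by (intro sum.cong refl fm Lb_set) auto
  also have "\<dots> = real l * (\<Sum>bs\<in>Lb l n. f bs)" by (simp add: sum_distrib_left)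
  finally show ?case using Suc by simp
qed

definition Q where "Q n = (\<Sum>bs\<in>Lb l n. (f bs)^2) / real l ^ n"
definition D where "D n = (\<Sum>bs\<in>Lb l n. \<Sum>i<l. (f (bs @ [i]) - f bs)^2) / real l ^ Suc n"

lemma D_tele: "D n = Q (Suc n) - Q n"
proof -
  have pt: "(\<Sum>i<l. (f (bs @ [i]) - f bs)^2) = (\<Sum>i<l. (f (bs @ [i]))^2) - real l * (f bs)^2"
    if "bs \<in> Lb l n" for bs
  proof -
    have "(\<Sum>i<l. (f (bs @ [i]) - f bs)^2) = (\<Sum>i<l. (f (bs @ [i]))^2 - 2 * f bs * f (bs @ [i]) + (f bs)^2)"
      by (intro sum.cong refl) (simp add: power2_diff)
    also have "\<dots> = (\<Sum>i<l. (f (bs @ [i]))^2) - 2 * f bs * (\<Sum>i<l. f (bs @ [i])) + real l * (f bs)^2"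
      by (simp add: sum.distrib sum_subtractf sum_distrib_left)
    also have "(\<Sum>i<l. f (bs @ [i])) = real l * f bs" using fm Lb_set[OF that] by blast
    finally show ?thesis by (simp add: power2_eq_square algebra_simps)
  qed
  have "(\<Sum>bs\<in>Lb l n. \<Sum>i<l. (f (bs @ [i]) - f bs)^2) = (\<Sum>bs\<in>Lb l (Suc n). (f bs)^2) - real l * (\<Sum>bs\<in>Lb l n. (f bs)^2)"
    unfolding sum_Lb_Suc by (simp add: pt sum_subtractf sum_distrib_left)
  thus ?thesis using l by (simp add: D_def Q_def field_simps)
qed

lemma Q_bounds: "0 \<le> Q n" "Q n \<le> 1"
proof -
  have "(\<Sum>bs\<in>Lb l n. (f bs)^2) \<le> (\<Sum>bs\<in>Lb l n. 1)"
    by (intro sum_mono) (use fb Lb_set in \<open>auto simp: power_le_one\<close>)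
  also have "\<dots> = real l ^ n" by (simp add: card_Lb)
  finally have "(\<Sum>bs\<in>Lb l n. (f bs)^2) \<le> real l ^ n" .
  thus "Q n \<le> 1" using l by (simp add: Q_def)
  show "0 \<le> Q n" by (simp add: Q_def sum_nonneg)
qed

lemma D_nonneg: "D n \<ge> 0" by (simp add: D_def sum_nonneg)

lemma D_summable: "summable D"
proof (rule summableI_nonneg_bounded[where x=1])
  fix n show "D n \<ge> 0" by (rule D_nonneg)
  show "(\<Sum>i<n. D i) \<le> 1"
    using Q_bounds[of n] Q_bounds[of 0] by (simp add: D_tele sum_lessThan_telescope)
qed

end


locale bseq = prob_space M for M :: "'a measure" +
  fixes B :: "nat \<Rightarrow> 'a \<Rightarrow> nat" and l :: nat
  assumes indep: "indep_vars (\<lambda>_. count_space UNIV) B {1..}"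
    and dist: "\<And>n. n \<ge> 1 \<Longrightarrow> distr M (count_space UNIV) (B n) = measure_pmf (pmf_of_set {..<l})"
    and l1: "l \<ge> 1"
begin

lemma Bmeas: "k \<ge> 1 \<Longrightarrow> B k \<in> measurable M (count_space UNIV)"
  using indep unfolding indep_vars_def by auto

lemma Bsets: "k \<ge> 1 \<Longrightarrow> {\<omega> \<in> space M. B k \<omega> = b} \<in> sets M"
  using Bmeas[of k] by (simp add: measurable_count_space_eq2_countable vimage_def Int_def conj_commute)

lemma prob_B: "k \<ge> 1 \<Longrightarrow> prob {\<omega> \<in> space M. B k \<omega> = b} = (if b < l then 1 / real l else 0)"
proof -
  assume k: "k \<ge> 1"
  have "0 \<in> {..<l}" using l1 by simp
  hence ne: "{..<l} \<noteq> {}" by blast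
  have "prob {\<omega> \<in> space M. B k \<omega> = b} = measure (distr M (count_space UNIV) (B k)) {b}"
    by (subst measure_distr[OF Bmeas[OF k]]) (auto simp: vimage_def Int_def conj_commute)
  also have "\<dots> = measure (measure_pmf (pmf_of_set {..<l})) {b}" using dist[OF k] by simp
  also have "\<dots> = pmf (pmf_of_set {..<l}) b" by (simp add: measure_pmf_single)
  also have "\<dots> = (if b < l then 1 / real l else 0)" using ne by (simp add: indicator_def)
  finally show ?thesis .
qed

lemma AE_B: "AE \<omega> in M. \<forall>k\<ge>1. B k \<omega> < l"
proof -
  have "AE \<omega> in M. B k \<omega> < l" if k: "k \<ge> 1" for k
  proof (rule AE_distrD[OF Bmeas[OF k]])
    have "0 \<in> {..<l}" using l1 by simp
  hence ne: "{..<l} \<noteq> {}" by blast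
    have "AE x in measure_pmf (pmf_of_set {..<l}). x \<in> set_pmf (pmf_of_set {..<l})" by (rule AE_measure_pmf)
    thus "AE x in distr M (count_space UNIV) (B k). x < l" unfolding dist[OF k] using ne by simp
  qed
  hence "\<forall>k. AE \<omega> in M. k \<ge> 1 \<longrightarrow> B k \<omega> < l" by auto
  thus ?thesis by (subst (asm) AE_all_countable[symmetric]) auto
qed

definition Bs :: "nat \<Rightarrow> 'a \<Rightarrow> nat list" where
  "Bs n \<omega> = map (\<lambda>k. B k \<omega>) [1..<Suc n]"

lemma Bs_len[simp]: "length (Bs n \<omega>) = n" by (simp add: Bs_def)

lemma Bs_Suc: "Bs (Suc n) \<omega> = Bs n \<omega> @ [B (Suc n) \<omega>]" by (simp add: Bs_def)

lemma Bs_nth: "k < n \<Longrightarrow> Bs n \<omega> ! k = B (Suc k) \<omega>"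
  by (simp add: Bs_def del: upt_Suc)

lemma Bs_eq: "Bs n \<omega> = bs \<longleftrightarrow> length bs = n \<and> (\<forall>k<n. B (Suc k) \<omega> = bs ! k)"
proof -
  have "Bs n \<omega> = bs \<longleftrightarrow> length (Bs n \<omega>) = length bs \<and> (\<forall>k<length (Bs n \<omega>). Bs n \<omega> ! k = bs ! k)"
    by (rule list_eq_iff_nth_eq)
  thus ?thesis using Bs_nth[of _ n \<omega>] by auto
qed

lemma Bs_event: "{\<omega> \<in> space M. Bs n \<omega> = bs} =
    (if length bs = n then {\<omega> \<in> space M. \<forall>k<n. B (Suc k) \<omega> = bs ! k} else {})"
  unfolding Bs_eq by auto

lemma Bs_event_sets: "{\<omega> \<in> space M. Bs n \<omega> = bs} \<in> sets M"
proof (cases "length bs = n")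
  case True
  have "{\<omega> \<in> space M. \<forall>k<n. B (Suc k) \<omega> = bs ! k} \<in> sets M"
  proof (cases "n = 0")
    case True thus ?thesis by simp
  next
    case False
    have "{\<omega> \<in> space M. \<forall>k<n. B (Suc k) \<omega> = bs ! k} = (\<Inter>k\<in>{..<n}. {\<omega> \<in> space M. B (Suc k) \<omega> = bs ! k})"
      using False by auto
    also have "\<dots> \<in> sets M" using False by (intro sets.finite_INT Bsets) auto
    finally show ?thesis .
  qed
  moreover have "{\<omega> \<in> space M. Bs n \<omega> = bs} = {\<omega> \<in> space M. \<forall>k<n. B (Suc k) \<omega> = bs ! k}"
    using True unfolding Bs_eq by blast
  ultimately show ?thesis by (simp only:)
next
  case False
  hence "{\<omega> \<in> space M. Bs n \<omega> = bs} = {}" unfolding Bs_eq by blast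
  thus ?thesis by (simp only: sets.empty_sets)
qed

lemma Bs_meas: "Bs n \<in> measurable M (count_space UNIV)"
  unfolding measurable_count_space_eq2_countable
  using Bs_event_sets by (auto simp: vimage_def Int_def conj_commute)

lemma prob_Bs: "bs \<in> Lb l n \<Longrightarrow> prob {\<omega> \<in> space M. Bs n \<omega> = bs} = (1 / real l) ^ n"
proof -
  assume bs: "bs \<in> Lb l n"
  hence len: "length bs = n" and sb: "set bs \<subseteq> {..<l}" by (auto simp: Lb_def)
  show ?thesis
  proof (cases "n = 0")
    case True
    have "{\<omega> \<in> space M. Bs n \<omega> = bs} = space M" using True len by (auto simp: Bs_def)
    thus ?thesis using True by (simp add: prob_space)
  next
    case False
    have e: "{\<omega> \<in> space M. Bs n \<omega> = bs} = (\<Inter>j\<in>{1..n}. B j -` {bs ! (j - 1)} \<inter> space M)"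
      using False len by (auto simp: Bs_event) (metis Suc_le_eq diff_Suc_1 le_add1 plus_1_eq_Suc Suc_pred)+
    have ind: "indep_sets (\<lambda>i. sigma_sets (space M) {B i -` A \<inter> space M | A. A \<in> sets (count_space UNIV)}) {1..}"
      using indep unfolding indep_vars_def by auto
    have "prob (\<Inter>j\<in>{1..n}. B j -` {bs ! (j - 1)} \<inter> space M) = (\<Prod>j\<in>{1..n}. prob (B j -` {bs ! (j - 1)} \<inter> space M))"
      by (rule indep_setsD[OF ind]) (use False in \<open>auto intro: sigma_sets.Basic\<close>)
    also have "\<dots> = (\<Prod>j\<in>{1..n}. 1 / real l)"
    proof (intro prod.cong refl)
      fix j assume j: "j \<in> {1..n}"
      have "bs ! (j - 1) < l" using sb j len by (auto simp: subset_iff)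
      moreover have "B j -` {bs ! (j - 1)} \<inter> space M = {\<omega> \<in> space M. B j \<omega> = bs ! (j - 1)}" by auto
      ultimately show "prob (B j -` {bs ! (j - 1)} \<inter> space M) = 1 / real l" using prob_B[of j] j by simp
    qed
    also have "\<dots> = (1 / real l) ^ n" by simp
    finally show ?thesis using e by simp
  qed
qed

lemma AE_Bs: "AE \<omega> in M. \<forall>n. Bs n \<omega> \<in> Lb l n"
  using AE_B
proof eventually_elim
  fix \<omega> assume a: "\<forall>k\<ge>1. B k \<omega> < l"
  show "\<forall>n. Bs n \<omega> \<in> Lb l n"
    using a by (auto simp: Lb_def Bs_def)
qed

lemma Bs_pre_sets: "{\<omega> \<in> space M. Bs n \<omega> \<in> S} \<in> sets M"
proof -
  have "Bs n -` S \<inter> space M \<in> sets M" by (rule measurable_sets[OF Bs_meas]) simp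
  moreover have "Bs n -` S \<inter> space M = {\<omega> \<in> space M. Bs n \<omega> \<in> S}" by auto
  ultimately show ?thesis by simp
qed

lemma prob_Bs_set: "prob {\<omega> \<in> space M. Bs n \<omega> \<in> S} = real (card (S \<inter> Lb l n)) / real l ^ n"
proof -
  define U where "U = (\<Union>bs\<in>S \<inter> Lb l n. {\<omega> \<in> space M. Bs n \<omega> = bs})"
  have Us: "U \<in> sets M" unfolding U_def by (intro sets.finite_UN Bs_event_sets) auto
  have "prob {\<omega> \<in> space M. Bs n \<omega> \<in> S} = prob U"
  proof (rule finite_measure_eq_AE[OF _ Bs_pre_sets Us])
    show "AE x in M. (x \<in> {\<omega> \<in> space M. Bs n \<omega> \<in> S}) = (x \<in> U)"
      using AE_Bs by eventually_elim (auto simp: U_def)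
  qed
  also have "prob U = (\<Sum>bs\<in>S \<inter> Lb l n. prob {\<omega> \<in> space M. Bs n \<omega> = bs})"
    unfolding U_def
    by (rule measure_finite_Union) (auto simp: disjoint_family_on_def Bs_event_sets emeasure_eq_measure)
  also have "\<dots> = (\<Sum>bs\<in>S \<inter> Lb l n. (1 / real l) ^ n)"
    by (intro sum.cong refl prob_Bs) auto
  also have "\<dots> = real (card (S \<inter> Lb l n)) / real l ^ n" by (simp add: power_divide)
  finally show ?thesis .
qed

lemma Bs_comp_meas: "(\<lambda>\<omega>. h (Bs n \<omega>) :: real) \<in> borel_measurable M"
  by (rule measurable_compose[OF Bs_meas]) simp

lemma integral_Bs: "integral\<^sup>L M (\<lambda>\<omega>. h (Bs n \<omega>) :: real) = (\<Sum>bs\<in>Lb l n. h bs) / real l ^ n"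
proof -
  have "integral\<^sup>L M (\<lambda>\<omega>. h (Bs n \<omega>)) = integral\<^sup>L M (\<lambda>\<omega>. \<Sum>bs\<in>Lb l n. h bs * indicator {\<omega> \<in> space M. Bs n \<omega> = bs} \<omega>)"
  proof (rule integral_cong_AE)
    show "(\<lambda>\<omega>. h (Bs n \<omega>)) \<in> borel_measurable M" by (rule Bs_comp_meas)
    show "(\<lambda>\<omega>. \<Sum>bs\<in>Lb l n. h bs * indicator {\<omega> \<in> space M. Bs n \<omega> = bs} \<omega>) \<in> borel_measurable M"
      by (intro borel_measurable_sum borel_measurable_times borel_measurable_const borel_measurable_indicator Bs_event_sets)
    show "AE \<omega> in M. h (Bs n \<omega>) = (\<Sum>bs\<in>Lb l n. h bs * indicator {\<omega> \<in> space M. Bs n \<omega> = bs} \<omega>)"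
      using AE_Bs AE_space
    proof eventually_elim
      fix \<omega> assume a: "\<forall>n. Bs n \<omega> \<in> Lb l n" and sp: "\<omega> \<in> space M"
      have "(\<Sum>bs\<in>Lb l n. h bs * indicator {\<omega> \<in> space M. Bs n \<omega> = bs} \<omega>)
          = (\<Sum>bs\<in>Lb l n. (if bs = Bs n \<omega> then h bs else 0))"
        using sp by (intro sum.cong refl) (auto simp: indicator_def)
      also have "\<dots> = h (Bs n \<omega>)" using a by (simp add: sum.delta')
      finally show "h (Bs n \<omega>) = (\<Sum>bs\<in>Lb l n. h bs * indicator {\<omega> \<in> space M. Bs n \<omega> = bs} \<omega>)" by simp
    qed
  qed
  also have "\<dots> = (\<Sum>bs\<in>Lb l n. h bs * prob {\<omega> \<in> space M. Bs n \<omega> = bs})"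
  proof -
    have int: "integrable M (\<lambda>\<omega>. h bs * indicator {\<omega> \<in> space M. Bs n \<omega> = bs} \<omega>)" for bs
      by (intro integrable_mult_right integrable_real_indicator Bs_event_sets) (simp add: emeasure_eq_measure)
    have "integral\<^sup>L M (\<lambda>\<omega>. \<Sum>bs\<in>Lb l n. h bs * indicator {\<omega> \<in> space M. Bs n \<omega> = bs} \<omega>)
        = (\<Sum>bs\<in>Lb l n. integral\<^sup>L M (\<lambda>\<omega>. h bs * indicator {\<omega> \<in> space M. Bs n \<omega> = bs} \<omega>))"
      by (rule Bochner_Integration.integral_sum[where f="\<lambda>bs \<omega>. h bs * indicator {\<omega> \<in> space M. Bs n \<omega> = bs} \<omega>"]) (rule int)
    also have "\<dots> = (\<Sum>bs\<in>Lb l n. h bs * prob {\<omega> \<in> space M. Bs n \<omega> = bs})"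
    proof (intro sum.cong refl)
      fix bs
      have "{\<omega> \<in> space M. Bs n \<omega> = bs} \<inter> space M = {\<omega> \<in> space M. Bs n \<omega> = bs}" by auto
      thus "integral\<^sup>L M (\<lambda>\<omega>. h bs * indicator {\<omega> \<in> space M. Bs n \<omega> = bs} \<omega>) = h bs * prob {\<omega> \<in> space M. Bs n \<omega> = bs}"
        by simp
    qed
    finally show ?thesis .
  qed
  also have "\<dots> = (\<Sum>bs\<in>Lb l n. h bs * (1 / real l) ^ n)" by (intro sum.cong refl) (simp add: prob_Bs)
  also have "\<dots> = (\<Sum>bs\<in>Lb l n. h bs) / real l ^ n" by (simp add: sum_divide_distrib power_divide)
  finally show ?thesis .
qed

end


lemma card_le_weight:
  fixes w :: "'b \<Rightarrow> real"
  assumes "finite T" "\<And>x. x \<in> T \<Longrightarrow> w x \<ge> 0" "\<And>x. x \<in> S \<Longrightarrow> x \<in> T \<Longrightarrow> w x \<ge> 1"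
  shows "real (card (S \<inter> T)) \<le> (\<Sum>x\<in>T. w x)"
proof -
  have "real (card (S \<inter> T)) = (\<Sum>x\<in>S \<inter> T. 1)" by simp
  also have "\<dots> \<le> (\<Sum>x\<in>S \<inter> T. w x)" by (intro sum_mono) (use assms in auto)
  also have "\<dots> \<le> (\<Sum>x\<in>T. w x)" by (intro sum_mono2) (use assms in auto)
  finally show ?thesis .
qed

locale polar_main = bseq M B l + polar_fun l f for M :: "'a measure" and B l f +
  assumes fg: "\<And>d. d > 0 \<Longrightarrow> \<exists>\<kappa>>0. \<forall>bs. set bs \<subseteq> {..<l} \<longrightarrow> d \<le> f bs \<longrightarrow> f bs \<le> 1 - d
      \<longrightarrow> f (bs @ [l - 1]) \<ge> f bs + \<kappa>"
begin

definition X where "X n \<omega> = f (Bs n \<omega>)"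

lemma X_meas: "X n \<in> borel_measurable M"
  unfolding X_def by (rule Bs_comp_meas)

lemma sumD: "(\<Sum>bs\<in>Lb l n. \<Sum>i<l. (f (bs @ [i]) - f bs)^2) = D n * real l ^ Suc n"
  using l by (simp add: D_def)

lemma jump_summable:
  assumes e: "e > 0"
  shows "summable (\<lambda>n. prob {\<omega> \<in> space M. e \<le> \<bar>X (Suc n) \<omega> - X n \<omega>\<bar>})"
proof (rule summable_comparison_test[where g="\<lambda>n. D n / e^2"])
  show "summable (\<lambda>n. D n / e^2)" by (intro summable_divide D_summable)
  define S where "S = {bs'. e \<le> \<bar>f bs' - f (butlast bs')\<bar>}"
  have "norm (prob {\<omega> \<in> space M. e \<le> \<bar>X (Suc n) \<omega> - X n \<omega>\<bar>}) \<le> D n / e^2" for n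
  proof -
    have ev: "{\<omega> \<in> space M. e \<le> \<bar>X (Suc n) \<omega> - X n \<omega>\<bar>} = {\<omega> \<in> space M. Bs (Suc n) \<omega> \<in> S}"
      by (simp add: X_def S_def Bs_Suc)
    have "real (card (S \<inter> Lb l (Suc n))) \<le> (\<Sum>bs'\<in>Lb l (Suc n). (f bs' - f (butlast bs'))^2 / e^2)"
    proof (rule card_le_weight)
      fix x assume "x \<in> S"
      hence "e^2 \<le> \<bar>f x - f (butlast x)\<bar>^2" unfolding S_def using e
        by (intro power_mono) auto
      hence "e^2 \<le> (f x - f (butlast x))^2" by simp
      thus "1 \<le> (f x - f (butlast x))^2 / e^2" using e by simp
    qed auto
    also have "\<dots> = (\<Sum>bs\<in>Lb l n. \<Sum>i<l. (f (bs @ [i]) - f bs)^2) / e^2"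
      by (simp add: sum_Lb_Suc sum_divide_distrib)
    also have "\<dots> = D n * real l ^ Suc n / e^2" by (simp add: sumD)
    finally have c: "real (card (S \<inter> Lb l (Suc n))) \<le> D n * real l ^ Suc n / e^2" .
    have "prob {\<omega> \<in> space M. e \<le> \<bar>X (Suc n) \<omega> - X n \<omega>\<bar>} = real (card (S \<inter> Lb l (Suc n))) / real l ^ Suc n"
      unfolding ev by (rule prob_Bs_set)
    also have "\<dots> \<le> (D n * real l ^ Suc n / e^2) / real l ^ Suc n"
      using c l by (intro divide_right_mono) auto
    also have "\<dots> = D n / e^2" using l by simp
    finally show ?thesis by simp
  qed
  thus "\<exists>N. \<forall>n\<ge>N. norm (prob {\<omega> \<in> space M. e \<le> \<bar>X (Suc n) \<omega> - X n \<omega>\<bar>}) \<le> D n / e^2" by blast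
qed

lemma mid_summable:
  assumes d: "d > 0"
  shows "summable (\<lambda>n. prob {\<omega> \<in> space M. d \<le> X n \<omega> \<and> X n \<omega> \<le> 1 - d})"
proof -
  obtain \<kappa> where k: "\<kappa> > 0" and kf: "\<And>bs. set bs \<subseteq> {..<l} \<Longrightarrow> d \<le> f bs \<Longrightarrow> f bs \<le> 1 - d \<Longrightarrow> f (bs @ [l - 1]) \<ge> f bs + \<kappa>"
    using fg[OF d] by blast
  show ?thesis
  proof (rule summable_comparison_test[where g="\<lambda>n. real l * D n / \<kappa>^2"])
    show "summable (\<lambda>n. real l * D n / \<kappa>^2)" by (intro summable_divide summable_mult D_summable)
    define S where "S = {bs. d \<le> f bs \<and> f bs \<le> 1 - d}"
    have "norm (prob {\<omega> \<in> space M. d \<le> X n \<omega> \<and> X n \<omega> \<le> 1 - d}) \<le> real l * D n / \<kappa>^2" for n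
    proof -
      have ev: "{\<omega> \<in> space M. d \<le> X n \<omega> \<and> X n \<omega> \<le> 1 - d} = {\<omega> \<in> space M. Bs n \<omega> \<in> S}"
        by (simp add: X_def S_def)
      have "real (card (S \<inter> Lb l n)) \<le> (\<Sum>bs\<in>Lb l n. (f (bs @ [l - 1]) - f bs)^2 / \<kappa>^2)"
      proof (rule card_le_weight)
        fix x assume "x \<in> S" "x \<in> Lb l n"
        hence "f (x @ [l - 1]) - f x \<ge> \<kappa>" using kf[of x] Lb_set[of x l n] unfolding S_def by auto
        hence "\<kappa>^2 \<le> (f (x @ [l - 1]) - f x)^2" using k by (intro power_mono) auto
        thus "1 \<le> (f (x @ [l - 1]) - f x)^2 / \<kappa>^2" using k by simp
      qed auto
      also have "\<dots> \<le> (\<Sum>bs\<in>Lb l n. (\<Sum>i<l. (f (bs @ [i]) - f bs)^2) / \<kappa>^2)"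
      proof (intro sum_mono divide_right_mono)
        fix bs
        show "(f (bs @ [l - 1]) - f bs)^2 \<le> (\<Sum>i<l. (f (bs @ [i]) - f bs)^2)"
          using member_le_sum[of "l - 1" "{..<l}" "\<lambda>i. (f (bs @ [i]) - f bs)^2"] l by auto
      qed auto
      also have "\<dots> = (\<Sum>bs\<in>Lb l n. \<Sum>i<l. (f (bs @ [i]) - f bs)^2) / \<kappa>^2"
        by (simp add: sum_divide_distrib)
      also have "\<dots> = D n * real l ^ Suc n / \<kappa>^2" by (simp only: sumD)
      finally have c: "real (card (S \<inter> Lb l n)) \<le> D n * real l ^ Suc n / \<kappa>^2" .
      have "prob {\<omega> \<in> space M. d \<le> X n \<omega> \<and> X n \<omega> \<le> 1 - d} = real (card (S \<inter> Lb l n)) / real l ^ n"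
        unfolding ev by (rule prob_Bs_set)
      also have "\<dots> \<le> (D n * real l ^ Suc n / \<kappa>^2) / real l ^ n"
        using c l by (intro divide_right_mono) auto
      also have "\<dots> = real l * D n / \<kappa>^2" using l by (simp add: field_simps)
      finally show ?thesis by simp
    qed
    thus "\<exists>N. \<forall>n\<ge>N. norm (prob {\<omega> \<in> space M. d \<le> X n \<omega> \<and> X n \<omega> \<le> 1 - d}) \<le> real l * D n / \<kappa>^2" by blast
  qed
qed

lemma X_bounds: "AE \<omega> in M. \<forall>n. 0 \<le> X n \<omega> \<and> X n \<omega> \<le> 1"
  using AE_Bs
proof eventually_elim
  fix \<omega> assume "\<forall>n. Bs n \<omega> \<in> Lb l n"
  thus "\<forall>n. 0 \<le> X n \<omega> \<and> X n \<omega> \<le> 1" using fb Lb_set unfolding X_def by blast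
qed

lemma AE_jump: "AE \<omega> in M. \<forall>k::nat. \<forall>\<^sub>F n in sequentially. \<bar>X (Suc n) \<omega> - X n \<omega>\<bar> < 1 / (real k + 4)"
proof (subst AE_all_countable, intro allI)
  fix k :: nat
  define A where "A n = {\<omega> \<in> space M. 1 / (real k + 4) \<le> \<bar>X (Suc n) \<omega> - X n \<omega>\<bar>}" for n
  have [measurable]: "X n \<in> borel_measurable M" for n by (rule X_meas)
  have "AE \<omega> in M. \<forall>\<^sub>F n in sequentially. \<omega> \<in> space M - A n"
  proof (rule borel_cantelli_AE1)
    show "A n \<in> sets M" for n unfolding A_def by measurable
    show "emeasure M (A n) < \<infinity>" for n by (simp add: emeasure_eq_measure)
    show "summable (\<lambda>n. measure M (A n))" unfolding A_def by (rule jump_summable) auto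
  qed
  thus "AE \<omega> in M. \<forall>\<^sub>F n in sequentially. \<bar>X (Suc n) \<omega> - X n \<omega>\<bar> < 1 / (real k + 4)"
    by eventually_elim (auto elim!: eventually_mono simp: A_def)
qed

lemma AE_mid: "AE \<omega> in M. \<forall>k::nat. \<forall>\<^sub>F n in sequentially. \<not> (1 / (real k + 4) \<le> X n \<omega> \<and> X n \<omega> \<le> 1 - 1 / (real k + 4))"
proof (subst AE_all_countable, intro allI)
  fix k :: nat
  define A where "A n = {\<omega> \<in> space M. 1 / (real k + 4) \<le> X n \<omega> \<and> X n \<omega> \<le> 1 - 1 / (real k + 4)}" for n
  have [measurable]: "X n \<in> borel_measurable M" for n by (rule X_meas)
  have "AE \<omega> in M. \<forall>\<^sub>F n in sequentially. \<omega> \<in> space M - A n"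
  proof (rule borel_cantelli_AE1)
    show "A n \<in> sets M" for n unfolding A_def by measurable
    show "emeasure M (A n) < \<infinity>" for n by (simp add: emeasure_eq_measure)
    show "summable (\<lambda>n. measure M (A n))" unfolding A_def by (rule mid_summable) auto
  qed
  thus "AE \<omega> in M. \<forall>\<^sub>F n in sequentially. \<not> (1 / (real k + 4) \<le> X n \<omega> \<and> X n \<omega> \<le> 1 - 1 / (real k + 4))"
    by eventually_elim (auto elim!: eventually_mono simp: A_def)
qed

lemma main_result:
  "\<exists>I :: 'a \<Rightarrow> real. I \<in> borel_measurable M
    \<and> (AE \<omega> in M. (\<lambda>n. X n \<omega>) \<longlonglongrightarrow> I \<omega>)
    \<and> (AE \<omega> in M. I \<omega> \<in> {0, 1})
    \<and> measure M {\<omega> \<in> space M. I \<omega> = 1} = f []"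
proof -
  define I where "I \<omega> = lim (\<lambda>n. X n \<omega>)" for \<omega>
  have Im[measurable]: "I \<in> borel_measurable M" unfolding I_def
    by (rule borel_measurable_lim_metric) (rule X_meas)
  have AE1: "AE \<omega> in M. (\<lambda>n. X n \<omega>) \<longlonglongrightarrow> I \<omega> \<and> I \<omega> \<in> {0, 1}"
    using X_bounds AE_jump AE_mid
  proof eventually_elim
    fix \<omega>
    assume b: "\<forall>n. 0 \<le> X n \<omega> \<and> X n \<omega> \<le> 1"
      and j: "\<forall>k::nat. \<forall>\<^sub>F n in sequentially. \<bar>X (Suc n) \<omega> - X n \<omega>\<bar> < 1 / (real k + 4)"
      and m: "\<forall>k::nat. \<forall>\<^sub>F n in sequentially. \<not> (1 / (real k + 4) \<le> X n \<omega> \<and> X n \<omega> \<le> 1 - 1 / (real k + 4))"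
    obtain L where L: "L = 0 \<or> L = 1" "(\<lambda>n. X n \<omega>) \<longlonglongrightarrow> L"
      using polar_seq[of "\<lambda>n. X n \<omega>"] b j m by blast
    have "I \<omega> = L" unfolding I_def using L(2) by (rule limI)
    thus "(\<lambda>n. X n \<omega>) \<longlonglongrightarrow> I \<omega> \<and> I \<omega> \<in> {0, 1}" using L by auto
  qed
  have intX: "integral\<^sup>L M (X n) = f []" for n
  proof -
    have "integral\<^sup>L M (X n) = (\<Sum>bs\<in>Lb l n. f bs) / real l ^ n"
      unfolding X_def by (rule integral_Bs)
    also have "\<dots> = f []" using avg[of n] l by simp
    finally show ?thesis .
  qed
  have "(\<lambda>n. integral\<^sup>L M (X n)) \<longlonglongrightarrow> integral\<^sup>L M I"
  proof (rule integral_dominated_convergence[where w="\<lambda>_. 1"])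
    show "I \<in> borel_measurable M" by (rule Im)
    show "X n \<in> borel_measurable M" for n by (rule X_meas)
    show "integrable M (\<lambda>_. 1::real)" by simp
    show "AE x in M. (\<lambda>n. X n x) \<longlonglongrightarrow> I x" using AE1 by eventually_elim auto
    show "AE x in M. norm (X n x) \<le> 1" for n using X_bounds by eventually_elim auto
  qed
  hence "integral\<^sup>L M I = f []" unfolding intX using LIMSEQ_unique tendsto_const by metis
  moreover have "integral\<^sup>L M I = measure M {\<omega> \<in> space M. I \<omega> = 1}"
  proof -
    have "integral\<^sup>L M I = integral\<^sup>L M (indicator {\<omega> \<in> space M. I \<omega> = 1})"
    proof (rule integral_cong_AE)
      show "I \<in> borel_measurable M" by (rule Im)
      show "indicator {\<omega> \<in> space M. I \<omega> = 1} \<in> borel_measurable M" by measurable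
      show "AE x in M. I x = indicator {\<omega> \<in> space M. I \<omega> = 1} x"
        using AE1 AE_space by eventually_elim (auto simp: indicator_def)
    qed
    also have "\<dots> = measure M {\<omega> \<in> space M. I \<omega> = 1}" by (simp add: Int_absorb2 Collect_subset)
    finally show ?thesis .
  qed
  ultimately have me: "measure M {\<omega> \<in> space M. I \<omega> = 1} = f []" by simp
  have a: "AE \<omega> in M. (\<lambda>n. X n \<omega>) \<longlonglongrightarrow> I \<omega>" using AE1 by eventually_elim auto
  have b: "AE \<omega> in M. I \<omega> \<in> {0, 1}" using AE1 by eventually_elim auto
  show ?thesis by (intro exI[of _ I] conjI Im a b me)
qed

end

theorem proposition1:
  fixes l :: nat and g :: "bool list \<Rightarrow> bool list" and W :: "bool \<Rightarrow> 'y \<Rightarrow> real"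
    and M :: "'a measure" and B :: "nat \<Rightarrow> 'a \<Rightarrow> nat"
  assumes "l \<ge> 2"
    and "is_kernel l g"
    and "is_channel W"
    and "\<exists>u. length u = l - 1 \<and> hamming (g (u @ [False])) (g (u @ [True])) \<ge> 2"
    and "prob_space M"
    and "prob_space.indep_vars M (\<lambda>_. count_space UNIV) B {1..}"
    and "\<And>n. n \<ge> 1 \<Longrightarrow> distr M (count_space UNIV) (B n) = measure_pmf (pmf_of_set {..<l})"
  shows "\<exists>I_inf :: 'a \<Rightarrow> real. I_inf \<in> borel_measurable M
    \<and> (AE \<omega> in M. (\<lambda>n. sym_cap (chan_seq l g W B \<omega> n)) \<longlonglongrightarrow> I_inf \<omega>)
    \<and> (AE \<omega> in M. I_inf \<omega> \<in> {0, 1})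
    \<and> measure M {\<omega> \<in> space M. I_inf \<omega> = 1} = sym_cap W"
proof -
  note l2 = assms(1) and ker = assms(2) and chW = assms(3) and ham = assms(4)
  have l1: "l \<ge> 1" using l2 by simp
  define f where "f bs = sym_cap (chs l g W bs)" for bs
  have chs_ch: "is_channel (chs l g W bs)" if "set bs \<subseteq> {..<l}" for bs
    by (rule chs_channel[OF chW that])
  have bs: "bseq M B l"
    unfolding bseq_def bseq_axioms_def using assms(5,6,7) l1 by auto
  have pf: "polar_fun l f"
  proof (unfold polar_fun_def, intro conjI allI impI l1)
    fix bs :: "nat list" assume a: "set bs \<subseteq> {..<l}"
    show "0 \<le> f bs" "f bs \<le> 1" unfolding f_def using symcap_bounds[OF chs_ch[OF a]] by auto
  next
    fix bs :: "nat list" assume a: "set bs \<subseteq> {..<l}"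
    show "(\<Sum>i<l. f (bs @ [i])) = real l * f bs"
      unfolding f_def chs_snoc using chain_rule[OF chs_ch[OF a] ker l1] .
  qed
  have pa: "polar_main_axioms l f"
  proof (unfold polar_main_axioms_def, intro allI impI)
    fix d :: real assume d: "d > 0"
    define \<kappa> where "\<kappa> = (1 / 2 ^ (l - 1)) * (d * (d^2 * (2 * (ln 2)^2 / 9)))"
    have "\<kappa> > 0" using d by (simp add: \<kappa>_def)
    moreover have "f (bs @ [l - 1]) \<ge> f bs + \<kappa>" if "set bs \<subseteq> {..<l}" "d \<le> f bs" "f bs \<le> 1 - d" for bs
      unfolding f_def chs_snoc \<kappa>_def
      by (rule gain[OF chs_ch[OF that(1)] ker l2 ham d]) (use that in \<open>auto simp: f_def\<close>)
    ultimately show "\<exists>\<kappa>>0. \<forall>bs. set bs \<subseteq> {..<l} \<longrightarrow> d \<le> f bs \<longrightarrow> f bs \<le> 1 - d \<longrightarrow> f bs + \<kappa> \<le> f (bs @ [l - 1])"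
      by blast
  qed
  interpret P: polar_main M B l f by (intro polar_main.intro bs pf pa)
  obtain I where I: "I \<in> borel_measurable M" "AE \<omega> in M. (\<lambda>n. P.X n \<omega>) \<longlonglongrightarrow> I \<omega>"
      "AE \<omega> in M. I \<omega> \<in> {0, 1}" "measure M {\<omega> \<in> space M. I \<omega> = 1} = f []"
    using P.main_result by blast
  have X: "P.X n \<omega> = sym_cap (chan_seq l g W B \<omega> n)" for n \<omega>
    unfolding P.X_def P.Bs_def f_def chan_seq_chs ..
  have f0: "f [] = sym_cap W" unfolding f_def chs_def using lift_channel[OF chW] by simp
  show ?thesis
    by (intro exI[of _ I] conjI I(1,3)) (use I(2,4) X f0 in auto)
qed


end
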